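(* Let $q$ be a prime power. Let $P_1,\dots,P_n$ be distinct closed points of $\mathbb{P}^2_{\mathbb{F}_q}$ and $L_1,\dots,L_n$ lines defined over $\mathbb{F}_q$ (possibly with repetition) with $P_i\in L_i$ for each $i$. Let $Q_1,\dots,Q_s$ be distinct $\mathbb{F}_q$-points of $\mathbb{P}^2$ such that no $Q_j$ lies on any $L_i$. Then for all sufficiently large $d$, \[ \mu_d\left(\bigcap_{i=1}^n\mathcal{T}_{L_i,P_i}\cap\bigcap_{j=1}^s\mathcal{S}_{Q_j}\right)=q^{-3s-\sum_{i=1}^n 2\deg(P_i)}, \] and consequently the natural density of this intersection exists and equals the same value.
   Context: Let $R=\mathbb{F}_q[x,y,z]$, $R_d$ the homogeneous polynomials of degree $d$ (including $0$), $R_{\mathrm{homog}}=\bigcup_{d\ge1}R_d$, $\mu_d(\mathcal{A})=\#(\mathcal{A}\cap R_d)/\#R_d$, $\mu(\mathcal{A})=\lim_d\mu_d(\mathcal{A})$. For a closed point $P$, $\deg(P)$ is the degree of its residue field over $\mathbb{F}_q$, and $\mathfrak{m}_P$ is the homogeneous ideal of polynomials vanishing at $P$. For an $\mathbb{F}_q$-point $Q$, $\mathcal{S}_Q=\{f\in R_{\mathrm{homog}}: \{f=0\}\text{ is singular at }Q\}$, i.e. $f\in\mathfrak{m}_Q^2$. For an $\mathbb{F}_q$-line $L$ and a closed point $P\in L$, $\mathcal{T}_{L,P}=\{f\in R_{\mathrm{homog}}:\{f=0\}\text{ is tangent to }L\text{ at }P\}$, where "tangent to $L$ at $P$" means the restriction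 of $f$ to $L$ vanishes to order at least $2$ at $P$ (this includes the case that the curve is singular at $P$). *)

theory Defs
  imports Complex_Main "HOL-Computational_Algebra.Polynomial"
begin

type_synonym 'k vec3 = "'k \<times> 'k \<times> 'k"
type_synonym mono3 = "nat \<times> nat \<times> nat"

definition mons3 :: "nat \<Rightarrow> mono3 set" where
  "mons3 d = {(a,b,c). a + b + c = d}"

definition hom_polys :: "'k::field set \<Rightarrow> nat \<Rightarrow> (mono3 \<Rightarrow> 'k) set" where
  "hom_polys F d = {f. (\<forall>m. f m \<in> F) \<and> (\<forall>m. m \<notin> mons3 d \<longrightarrow> f m = 0)}"

definition is_subfield :: "'k::field set \<Rightarrow> bool" where
  "is_subfield F \<longleftrightarrow> 0 \<in> F \<and> 1 \<in> F \<and> (\<forall>x\<in>F. \<forall>y\<in>F. x + y \<in> F \<and> x * y \<in> F)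
     \<and> (\<forall>x\<in>F. - x \<in> F \<and> inverse x \<in> F)"

definition alg_closed :: "'k::field itself \<Rightarrow> bool" where
  "alg_closed _ \<longleftrightarrow> (\<forall>p :: 'k poly. degree p > 0 \<longrightarrow> (\<exists>x. poly p x = 0))"

definition Fvec :: "'k::field set \<Rightarrow> 'k vec3 \<Rightarrow> bool" where
  "Fvec F v \<longleftrightarrow> fst v \<in> F \<and> fst (snd v) \<in> F \<and> snd (snd v) \<in> F"

definition scale3 :: "'k::field \<Rightarrow> 'k vec3 \<Rightarrow> 'k vec3" where
  "scale3 c v = (c * fst v, c * fst (snd v), c * snd (snd v))"

definition dot3 :: "'k::field vec3 \<Rightarrow> 'k vec3 \<Rightarrow> 'k" where
  "dot3 u v = fst u * fst v + fst (snd u) * fst (snd v) + snd (snd u) * snd (snd v)"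

definition proportional :: "'k::field vec3 \<Rightarrow> 'k vec3 \<Rightarrow> bool" where
  "proportional u v \<longleftrightarrow> (\<exists>c. c \<noteq> 0 \<and> v = scale3 c u)"

(* The geometric point (line through v) determined by a nonzero vector. *)
definition ppt :: "'k::field vec3 \<Rightarrow> 'k vec3 set" where
  "ppt v = {scale3 c v | c. c \<noteq> 0}"

definition frobv :: "nat \<Rightarrow> 'k::field vec3 \<Rightarrow> 'k vec3" where
  "frobv q v = (fst v ^ q, fst (snd v) ^ q, snd (snd v) ^ q)"

(* v represents a closed point of P^2 over F_q: nonzero, with finite Frobenius orbit. *)
definition closed_rep :: "nat \<Rightarrow> 'k::field vec3 \<Rightarrow> bool" where
  "closed_rep q v \<longleftrightarrow> v \<noteq> (0,0,0) \<and> (\<exists>e>0. proportional v ((frobv q ^^ e) v))"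

(* The closed point determined by v: the Frobenius orbit of geometric points. *)
definition cpt :: "nat \<Rightarrow> 'k::field vec3 \<Rightarrow> 'k vec3 set set" where
  "cpt q v = {ppt ((frobv q ^^ i) v) | i. True}"

definition cdeg :: "nat \<Rightarrow> 'k::field vec3 \<Rightarrow> nat" where
  "cdeg q v = card (cpt q v)"

(* Restriction of f to the affine line t \<mapsto> p + t w, as a polynomial in t. *)
definition line_restr :: "nat \<Rightarrow> (mono3 \<Rightarrow> 'k::field) \<Rightarrow> 'k vec3 \<Rightarrow> 'k vec3 \<Rightarrow> 'k poly" where
  "line_restr d f p w = (\<Sum>m\<in>mons3 d. [:f m:] * [:fst p, fst w:] ^ fst m
      * [:fst (snd p), fst (snd w):] ^ fst (snd m) * [:snd (snd p), snd (snd w):] ^ snd (snd m))"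

definition singular_at :: "nat \<Rightarrow> (mono3 \<Rightarrow> 'k::field) \<Rightarrow> 'k vec3 \<Rightarrow> bool" where
  "singular_at d f p \<longleftrightarrow> (\<forall>w. monom 1 2 dvd line_restr d f p w)"

(* {f=0} tangent to the line {dot3 l x = 0} at the closed point of v: at every geometric point
  of the closed point, the restriction of f to the line vanishes to order \<ge> 2. *)
definition tangent_at :: "nat \<Rightarrow> nat \<Rightarrow> (mono3 \<Rightarrow> 'k::field) \<Rightarrow> 'k vec3 \<Rightarrow> 'k vec3 \<Rightarrow> bool" where
  "tangent_at q d f l v \<longleftrightarrow> (\<forall>i w. dot3 l w = 0 \<and> w \<noteq> (0,0,0)
      \<and> \<not> proportional ((frobv q ^^ i) v) w \<longrightarrow> monom 1 2 dvd line_restr d f ((frobv q ^^ i) v) w)"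

definition mu_d :: "'k::field set \<Rightarrow> nat \<Rightarrow> (nat \<Rightarrow> (mono3 \<Rightarrow> 'k) \<Rightarrow> bool) \<Rightarrow> real" where
  "mu_d F d A = real (card {f \<in> hom_polys F d. A d f}) / real (card (hom_polys F d))"

end

theory Submission
  imports Defs "HOL-Library.FuncSet"
begin


locale fq =
  fixes F :: "'k::field set" and q :: nat
  assumes subF: "is_subfield F" and finF: "finite F" and cardF: "card F = q"
begin

lemma F0: "0 \<in> F" and F1: "1 \<in> F"
  and Fadd: "x \<in> F \<Longrightarrow> y \<in> F \<Longrightarrow> x + y \<in> F"
  and Fmult: "x \<in> F \<Longrightarrow> y \<in> F \<Longrightarrow> x * y \<in> F"
  and Fuminus: "x \<in> F \<Longrightarrow> - x \<in> F"
  and Finverse: "x \<in> F \<Longrightarrow> inverse x \<in> F"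
  using subF unfolding is_subfield_def by auto

lemma Fdiff: "x \<in> F \<Longrightarrow> y \<in> F \<Longrightarrow> x - y \<in> F"
  using Fadd Fuminus by (metis diff_conv_add_uminus)

lemma Fdivide: "x \<in> F \<Longrightarrow> y \<in> F \<Longrightarrow> x / y \<in> F"
  using Fmult Finverse by (metis divide_inverse)

lemma Fpower: "x \<in> F \<Longrightarrow> x ^ n \<in> F"
  by (induction n) (auto intro: F1 Fmult)

lemma Fof_nat: "of_nat n \<in> F"
  by (induction n) (auto intro: F0 F1 Fadd)

lemma Fsum: "(\<And>i. i \<in> A \<Longrightarrow> g i \<in> F) \<Longrightarrow> sum g A \<in> F"
  by (induction A rule: infinite_finite_induct) (auto intro: F0 Fadd)

lemma Fprod: "(\<And>i. i \<in> A \<Longrightarrow> g i \<in> F) \<Longrightarrow> prod g A \<in> F"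
  by (induction A rule: infinite_finite_induct) (auto intro: F1 Fmult)

lemma q_ge2: "q \<ge> 2"
proof -
  have "{0,1} \<subseteq> F" using F0 F1 by auto
  hence "card {0::'k,1} \<le> card F" using finF card_mono by blast
  thus ?thesis using cardF by simp
qed

lemma F_pow_q: assumes "c \<in> F" shows "c ^ q = c"
proof (cases "c = 0")
  case True thus ?thesis using q_ge2 by simp
next
  case False
  define F' where "F' = F - {0}"
  have fin: "finite F'" using finF F'_def by auto
  have cF': "card F' = q - 1" using cardF F0 finF unfolding F'_def by (simp add: card_Diff_singleton)
  have inj: "inj_on (\<lambda>y. c * y) F'" using False by (auto simp: inj_on_def)
  have img: "(\<lambda>y. c * y) ` F' = F'"
  proof
    show "(\<lambda>y. c * y) ` F' \<subseteq> F'" using False assms Fmult unfolding F'_def by auto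
    show "F' \<subseteq> (\<lambda>y. c * y) ` F'"
    proof
      fix y assume y: "y \<in> F'"
      have "y / c \<in> F'" using y assms False Fdivide unfolding F'_def by auto
      moreover have "y = c * (y / c)" using False by simp
      ultimately show "y \<in> (\<lambda>y. c * y) ` F'" by blast
    qed
  qed
  have "prod id F' = prod id ((\<lambda>y. c * y) ` F')" using img by simp
  also have "\<dots> = prod (\<lambda>y. c * y) F'" using prod.reindex[OF inj] by simp
  also have "\<dots> = c ^ card F' * prod id F'" by (simp add: prod.distrib)
  finally have "prod id F' = c ^ card F' * prod id F'" .
  moreover have "prod id F' \<noteq> 0" using fin unfolding F'_def by (simp add: prod_zero_iff)
  ultimately have "c ^ (q - 1) = 1" using cF' by simp
  hence "c ^ (q - 1) * c = c" by simp
  moreover have "c ^ (q - 1) * c = c ^ q" using q_ge2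
    by (intro power_minus_mult) simp
  ultimately show ?thesis by metis
qed

lemma poly_id: "[:1, 1:] ^ q = (monom 1 q + 1 :: 'k poly)"
proof (rule ccontr)
  define h where "h = [:1, 1:] ^ q - (monom 1 q + 1 :: 'k poly)"
  assume ne: "[:1, 1:] ^ q \<noteq> (monom 1 q + 1 :: 'k poly)"
  hence h0: "h \<noteq> 0" unfolding h_def by simp
  have d1: "degree ([:1, 1::'k:] ^ q) = q" using degree_linear_power by blast
  have lc1: "coeff ([:1, 1::'k:] ^ q) q = 1"
    using lead_coeff_power[of "[:1,1::'k:]" q] d1 by simp
  have dh: "degree h \<le> q" unfolding h_def
    using d1 by (intro degree_diff_le) (auto intro: degree_add_le simp: degree_monom_eq)
  have "coeff h q = 0" unfolding h_def using lc1 q_ge2 by (simp add: coeff_monom)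
  hence "degree h \<noteq> q" using h0 leading_coeff_0_iff by metis
  hence dlt: "degree h < q" using dh by simp
  have "F \<subseteq> {x. poly h x = 0}"
  proof
    fix x assume x: "x \<in> F"
    have "1 + x \<in> F" using x F1 Fadd by auto
    hence "(1 + x) ^ q = 1 + x" using F_pow_q by blast
    moreover have "x ^ q = x" using x F_pow_q by blast
    ultimately show "x \<in> {x. poly h x = 0}" unfolding h_def
      by (simp add: poly_monom add.commute)
  qed
  hence "card F \<le> card {x. poly h x = 0}"
    using poly_roots_finite[OF h0] card_mono by blast
  also have "\<dots> \<le> degree h" using card_poly_roots_bound[OF h0] .
  finally show False using dlt cardF by simp
qed

lemma frob_add: "(x + y) ^ q = x ^ q + (y ^ q :: 'k)"
proof (cases "y = 0")
  case True thus ?thesis using q_ge2 by simp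
next
  case False
  have eq: "(1 + x / y) ^ q = (x / y) ^ q + 1"
    using arg_cong[OF poly_id, of "\<lambda>p. poly p (x / y)"] by (simp add: poly_monom)
  have "x + y = y * (1 + x / y)" using False by (simp add: field_simps)
  hence "(x + y) ^ q = (y * (1 + x / y)) ^ q" by simp
  also have "\<dots> = y ^ q * (1 + x / y) ^ q" by (simp add: power_mult_distrib)
  also have "\<dots> = y ^ q * ((x / y) ^ q + 1)" using eq by simp
  also have "\<dots> = x ^ q + y ^ q" using False by (simp add: power_divide field_simps)
  finally show ?thesis .
qed

lemma frobQ_add: "(x + y) ^ (q ^ i) = x ^ (q ^ i) + (y ^ (q ^ i) :: 'k)"
proof (induction i)
  case 0 thus ?case by simp
next
  case (Suc i)
  have "(x + y) ^ (q ^ Suc i) = ((x + y) ^ (q ^ i)) ^ q"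
    by (metis power_Suc2 power_mult)
  also have "\<dots> = (x ^ (q ^ i)) ^ q + (y ^ (q ^ i)) ^ q" using Suc frob_add by simp
  finally show ?case by (metis power_Suc2 power_mult)
qed

lemma qpow_pos: "q ^ i > 0" using q_ge2 by simp

lemma frobQ_uminus: "(- x) ^ (q ^ i) = - (x ^ (q ^ i) :: 'k)"
proof -
  have "0 = (x + - x) ^ (q ^ i)" using qpow_pos by (simp add: zero_power)
  also have "\<dots> = x ^ (q ^ i) + (- x) ^ (q ^ i)" by (rule frobQ_add)
  finally show ?thesis by (simp add: eq_neg_iff_add_eq_0 add.commute)
qed

lemma frobQ_diff: "(x - y) ^ (q ^ i) = x ^ (q ^ i) - (y ^ (q ^ i) :: 'k)"
  using frobQ_add[of x "- y" i] frobQ_uminus[of y i] by simp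

lemma frobQ_sum: "(sum g A) ^ (q ^ i) = (\<Sum>a\<in>A. (g a :: 'k) ^ (q ^ i))"
proof (induction A rule: infinite_finite_induct)
  case (infinite A) thus ?case using qpow_pos by (simp add: zero_power)
next
  case empty thus ?case using qpow_pos by (simp add: zero_power)
next
  case (insert x F) thus ?case by (simp add: frobQ_add)
qed

lemma F_pow_Q: "c \<in> F \<Longrightarrow> c ^ (q ^ i) = c"
proof (induction i)
  case 0 thus ?case by simp
next
  case (Suc i)
  have "c ^ (q ^ Suc i) = (c ^ q) ^ (q ^ i)" by (simp add: power_mult)
  thus ?case using Suc F_pow_q by simp
qed

lemma frobQ_divide: "(x / y) ^ (q ^ i) = x ^ (q ^ i) / (y ^ (q ^ i) :: 'k)"
  by (simp add: power_divide)

end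



fun mv :: "mono3 \<Rightarrow> 'k::field vec3 \<Rightarrow> 'k" where
  "mv (a,b,c) (x,y,z) = x ^ a * y ^ b * z ^ c"

fun mdv :: "mono3 \<Rightarrow> 'k::field vec3 \<Rightarrow> 'k vec3 \<Rightarrow> 'k" where
  "mdv (a,b,c) (x,y,z) (u,v,w) = of_nat a * x ^ (a - 1) * u * y ^ b * z ^ c
     + of_nat b * x ^ a * y ^ (b - 1) * v * z ^ c + of_nat c * x ^ a * y ^ b * z ^ (c - 1) * w"

fun mX :: "mono3 \<Rightarrow> 'k::field vec3 \<Rightarrow> 'k vec3 \<Rightarrow> 'k poly" where
  "mX (a,b,c) (x,y,z) (u,v,w) = [:x, u:] ^ a * [:y, v:] ^ b * [:z, w:] ^ c"

fun madd :: "mono3 \<Rightarrow> mono3 \<Rightarrow> mono3" where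
  "madd (a,b,c) (a',b',c') = (a + a', b + b', c + c')"

definition ev :: "nat \<Rightarrow> (mono3 \<Rightarrow> 'k::field) \<Rightarrow> 'k vec3 \<Rightarrow> 'k" where
  "ev d f p = (\<Sum>m\<in>mons3 d. f m * mv m p)"

definition dd :: "nat \<Rightarrow> (mono3 \<Rightarrow> 'k::field) \<Rightarrow> 'k vec3 \<Rightarrow> 'k vec3 \<Rightarrow> 'k" where
  "dd d f p w = (\<Sum>m\<in>mons3 d. f m * mdv m p w)"

definition lc :: "'k::field \<Rightarrow> 'k vec3 \<Rightarrow> 'k \<Rightarrow> 'k vec3 \<Rightarrow> 'k vec3" where
  "lc \<alpha> x \<beta> y = (\<alpha> * fst x + \<beta> * fst y, \<alpha> * fst (snd x) + \<beta> * fst (snd y),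
      \<alpha> * snd (snd x) + \<beta> * snd (snd y))"

definition mul :: "nat \<Rightarrow> nat \<Rightarrow> (mono3 \<Rightarrow> 'k::field) \<Rightarrow> (mono3 \<Rightarrow> 'k) \<Rightarrow> mono3 \<Rightarrow> 'k" where
  "mul d1 d2 f g m = (\<Sum>x\<in>{x \<in> mons3 d1 \<times> mons3 d2. madd (fst x) (snd x) = m}. f (fst x) * g (snd x))"

definition lin :: "'k::field vec3 \<Rightarrow> mono3 \<Rightarrow> 'k" where
  "lin l m = (if m = (1,0,0) then fst l else if m = (0,1,0) then fst (snd l)
     else if m = (0,0,1) then snd (snd l) else 0)"

definition one :: "mono3 \<Rightarrow> 'k::field" where
  "one m = (if m = (0,0,0) then 1 else 0)"

primrec lpow :: "'k::field vec3 \<Rightarrow> nat \<Rightarrow> mono3 \<Rightarrow> 'k" where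
  "lpow l 0 = one"
| "lpow l (Suc k) = mul 1 k (lin l) (lpow l k)"

definition smul :: "'k::field \<Rightarrow> (mono3 \<Rightarrow> 'k) \<Rightarrow> mono3 \<Rightarrow> 'k" where
  "smul c f = (\<lambda>m. c * f m)"

lemma finite_mons3: "finite (mons3 d)"
proof -
  have "mons3 d \<subseteq> {..d} \<times> {..d} \<times> {..d}" unfolding mons3_def by auto
  thus ?thesis by (rule finite_subset) auto
qed

lemma mons3_iff[simp]: "(a,b,c) \<in> mons3 d \<longleftrightarrow> a + b + c = d"
  unfolding mons3_def by simp

lemma mons3_0: "mons3 0 = {(0,0,0)}" unfolding mons3_def by auto
lemma mons3_1: "mons3 (Suc 0) = {(1,0,0),(0,1,0),(0,0,1)}" unfolding mons3_def by auto

lemma const_mult_poly: "[:c:] * p = smult c p"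
  by simp

lemma line_restr_alt: "line_restr d f p w = (\<Sum>m\<in>mons3 d. smult (f m) (mX m p w))"
  unfolding line_restr_def
proof (rule sum.cong[OF refl])
  fix m :: mono3
  obtain a b c where m: "m = (a,b,c)" by (cases m)
  obtain x y z where p: "p = (x,y,z)" by (cases p)
  obtain u v w' where w: "w = (u,v,w')" by (cases w)
  show "[:f m:] * [:fst p, fst w:] ^ fst m * [:fst (snd p), fst (snd w):] ^ fst (snd m) *
        [:snd (snd p), snd (snd w):] ^ snd (snd m) = smult (f m) (mX m p w)"
    unfolding m p w by (simp add: mult.assoc)
qed

lemma coeff_lin_pow0: "coeff ([:x, u:] ^ n) 0 = x ^ n"
  by (induction n) (auto simp: coeff_mult_0)

lemma coeff_mult_1: "coeff (p * q) (Suc 0) = coeff p 0 * coeff q (Suc 0) + coeff p (Suc 0) * coeff q 0"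
  by (simp add: coeff_mult atMost_Suc add.commute)

lemma coeff_lin_pow1: "coeff ([:x, u:] ^ n) (Suc 0) = of_nat n * x ^ (n - 1) * u"
proof (induction n)
  case 0 thus ?case by simp
next
  case (Suc n)
  have "coeff ([:x, u:] ^ Suc n) (Suc 0) = x * coeff ([:x, u:] ^ n) 1 + u * x ^ n"
    by (simp add: coeff_mult_1 coeff_lin_pow0)
  also have "\<dots> = of_nat (Suc n) * x ^ n * u"
    using Suc by (cases n) (simp_all add: algebra_simps)
  finally show ?case by simp
qed

lemma coeff_mX0: "coeff (mX m p w) 0 = mv m p"
  by (cases m; cases p; cases w) (simp add: coeff_mult_0 coeff_lin_pow0)

lemma coeff_mX1: "coeff (mX m p w) (Suc 0) = mdv m p w"
  by (cases m; cases p; cases w) (simp add: coeff_mult_1 coeff_mult_0 coeff_lin_pow0 coeff_lin_pow1 algebra_simps)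

lemma LR0: "coeff (line_restr d f p w) 0 = ev d f p"
  unfolding line_restr_alt ev_def coeff_sum by (simp add: coeff_mX0)

lemma LR1: "coeff (line_restr d f p w) (Suc 0) = dd d f p w"
  unfolding line_restr_alt dd_def coeff_sum by (simp add: coeff_mX1)

lemma t2_dvd_iff: "monom 1 2 dvd (g :: 'k::field poly) \<longleftrightarrow> coeff g 0 = 0 \<and> coeff g (Suc 0) = 0"
proof
  assume "monom 1 2 dvd g"
  then obtain r where "g = monom 1 2 * r" by blast
  thus "coeff g 0 = 0 \<and> coeff g (Suc 0) = 0" by (simp add: coeff_monom_mult)
next
  assume h: "coeff g 0 = 0 \<and> coeff g (Suc 0) = 0"
  obtain a g' where g: "g = pCons a g'" by (cases g)
  obtain b g'' where g': "g' = pCons b g''" by (cases g')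
  have "a = 0" "b = 0" using h g g' by auto
  hence "g = monom 1 2 * g''" using g g'
    by (simp add: numeral_2_eq_2 monom_Suc monom_0)
  thus "monom 1 2 dvd g" by simp
qed

lemma LR_t2_iff: "monom 1 2 dvd line_restr d f p w \<longleftrightarrow> ev d f p = 0 \<and> dd d f p w = 0"
  using t2_dvd_iff LR0 LR1 by metis

lemma natmult_pow: "of_nat a * x ^ (a - 1) * x = (of_nat a * x ^ a :: 'k::field)"
  by (cases a) auto

lemma mdv_euler: "mdv m p p = of_nat (fst m + fst (snd m) + snd (snd m)) * mv m p"
proof -
  obtain a b c where m: "m = (a,b,c)" by (cases m)
  obtain x y z where p: "p = (x,y,z)" by (cases p)
  have 1: "of_nat a * x ^ (a - 1) * x * y ^ b * z ^ c = of_nat a * (x ^ a * y ^ b * z ^ c)"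
    by (cases a) (simp_all add: mult_ac)
  have 2: "of_nat b * x ^ a * y ^ (b - 1) * y * z ^ c = of_nat b * (x ^ a * y ^ b * z ^ c)"
    by (cases b) (simp_all add: mult_ac)
  have 3: "of_nat c * x ^ a * y ^ b * z ^ (c - 1) * z = of_nat c * (x ^ a * y ^ b * z ^ c)"
    by (cases c) (simp_all add: mult_ac)
  show ?thesis unfolding m p mdv.simps mv.simps 1 2 3 by (simp add: distrib_right)
qed

lemma dd_euler: "dd d f p p = of_nat d * ev d f p"
  unfolding dd_def ev_def sum_distrib_left
  by (rule sum.cong[OF refl]) (auto simp: mdv_euler mons3_def algebra_simps)

lemma mdv_lc: "mdv m p (lc \<alpha> x \<beta> y) = \<alpha> * mdv m p x + \<beta> * mdv m p y"
  by (cases m; cases p; cases x; cases y) (simp add: lc_def algebra_simps)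

lemma dd_lc: "dd d f p (lc \<alpha> x \<beta> y) = \<alpha> * dd d f p x + \<beta> * dd d f p y"
  unfolding dd_def mdv_lc sum_distrib_left sum.distrib[symmetric]
  by (rule sum.cong[OF refl]) (simp add: algebra_simps)

lemma mv_scale: "mv m (scale3 c p) = c ^ (fst m + fst (snd m) + snd (snd m)) * mv m p"
  by (cases m; cases p) (simp add: scale3_def power_mult_distrib power_add algebra_simps)

lemma mdv_scale: "mdv m (scale3 c p) w = c ^ (fst m + fst (snd m) + snd (snd m) - 1) * mdv m p w"
proof -
  obtain a b k where m: "m = (a,b,k)" by (cases m)
  obtain x y z where p: "p = (x,y,z)" by (cases p)
  obtain u v w' where w: "w = (u,v,w')" by (cases w)
  have 1: "of_nat a * (c * x) ^ (a - 1) * u * (c * y) ^ b * (c * z) ^ k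
      = c ^ (a + b + k - 1) * (of_nat a * x ^ (a - 1) * u * y ^ b * z ^ k)"
    by (cases a) (simp_all add: power_mult_distrib power_add mult_ac)
  have 2: "of_nat b * (c * x) ^ a * (c * y) ^ (b - 1) * v * (c * z) ^ k
      = c ^ (a + b + k - 1) * (of_nat b * x ^ a * y ^ (b - 1) * v * z ^ k)"
  proof (cases b)
    case 0 thus ?thesis by simp
  next
    case (Suc b')
    have "a + b + k - 1 = a + b' + k" using Suc by simp
    thus ?thesis using Suc by (simp add: power_mult_distrib power_add mult_ac)
  qed
  have 3: "of_nat k * (c * x) ^ a * (c * y) ^ b * (c * z) ^ (k - 1) * w'
      = c ^ (a + b + k - 1) * (of_nat k * x ^ a * y ^ b * z ^ (k - 1) * w')"
  proof (cases k)
    case 0 thus ?thesis by simp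
  next
    case (Suc k')
    have "a + b + k - 1 = a + b + k'" using Suc by simp
    thus ?thesis using Suc by (simp add: power_mult_distrib power_add mult_ac)
  qed
  show ?thesis unfolding m p w scale3_def fst_conv snd_conv mdv.simps 1 2 3
    by (simp add: distrib_left)
qed

lemma ev_scale: "ev d f (scale3 c p) = c ^ d * ev d f p"
  unfolding ev_def sum_distrib_left
  by (rule sum.cong[OF refl]) (auto simp: mv_scale mons3_def algebra_simps)

lemma dd_scale: "dd d f (scale3 c p) w = c ^ (d - 1) * dd d f p w"
  unfolding dd_def sum_distrib_left
  by (rule sum.cong[OF refl]) (auto simp: mdv_scale mons3_def algebra_simps)

lemma ev_add: "ev d (\<lambda>m. f m + g m) p = ev d f p + ev d g p"
  unfolding ev_def by (simp add: algebra_simps sum.distrib)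
lemma dd_add: "dd d (\<lambda>m. f m + g m) p w = dd d f p w + dd d g p w"
  unfolding dd_def by (simp add: algebra_simps sum.distrib)
lemma ev_smul: "ev d (smul c f) p = c * ev d f p"
  unfolding ev_def smul_def by (simp add: algebra_simps sum_distrib_left)
lemma dd_smul: "dd d (smul c f) p w = c * dd d f p w"
  unfolding dd_def smul_def by (simp add: algebra_simps sum_distrib_left)
lemma ev_sum: "ev d (\<lambda>m. \<Sum>i\<in>I. g i m) p = (\<Sum>i\<in>I. ev d (g i) p)"
  unfolding ev_def sum_distrib_right by (rule sum.swap)
lemma dd_sum: "dd d (\<lambda>m. \<Sum>i\<in>I. g i m) p w = (\<Sum>i\<in>I. dd d (g i) p w)"
  unfolding dd_def sum_distrib_right by (rule sum.swap)
lemma ev_diff: "ev d (\<lambda>m. f m - g m) p = ev d f p - ev d g p"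
  unfolding ev_def by (simp add: algebra_simps sum_subtractf)
lemma dd_diff: "dd d (\<lambda>m. f m - g m) p w = dd d f p w - dd d g p w"
  unfolding dd_def by (simp add: algebra_simps sum_subtractf)
lemma ev_zero: "ev d (\<lambda>m. 0) p = 0" unfolding ev_def by simp
lemma dd_zero: "dd d (\<lambda>m. 0) p w = 0" unfolding dd_def by simp

lemma smult_sum_right: "smult c (\<Sum>i\<in>I. g i) = (\<Sum>i\<in>I. smult c (g i))"
  by (induction I rule: infinite_finite_induct) (auto simp: smult_add_right)

lemma LR_smul: "line_restr d (smul c f) p w = smult c (line_restr d f p w)"
  unfolding line_restr_alt smul_def smult_sum_right by simp

lemma LR_sum: "line_restr d (\<lambda>m. \<Sum>i\<in>I. g i m) p w = (\<Sum>i\<in>I. line_restr d (g i) p w)"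
  unfolding line_restr_alt smult_sum by (rule sum.swap)

lemma mX_madd: "mX (madd m1 m2) p w = mX m1 p w * mX m2 p w"
  by (cases m1; cases m2; cases p; cases w) (simp add: power_add algebra_simps)

lemma madd_mons3: "m1 \<in> mons3 d1 \<Longrightarrow> m2 \<in> mons3 d2 \<Longrightarrow> madd m1 m2 \<in> mons3 (d1 + d2)"
  by (cases m1; cases m2) simp

lemma LR_mul: "line_restr (d1 + d2) (mul d1 d2 f g) p w = line_restr d1 f p w * line_restr d2 g p w"
proof -
  let ?S = "mons3 d1 \<times> mons3 d2"
  let ?h = "\<lambda>x. smult (f (fst x) * g (snd x)) (mX (madd (fst x) (snd x)) p w)"
  have finS: "finite ?S" using finite_mons3 by auto
  have "line_restr d1 f p w * line_restr d2 g p w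
      = (\<Sum>m1\<in>mons3 d1. \<Sum>m2\<in>mons3 d2. smult (f m1) (mX m1 p w) * smult (g m2) (mX m2 p w))"
    unfolding line_restr_alt by (simp add: sum_product)
  also have "\<dots> = (\<Sum>x\<in>?S. ?h x)"
    unfolding sum.cartesian_product
    by (rule sum.cong[OF refl]) (auto simp: mX_madd mult.commute mult.left_commute)
  also have "\<dots> = (\<Sum>m\<in>mons3 (d1 + d2). \<Sum>x\<in>{x \<in> ?S. madd (fst x) (snd x) = m}. ?h x)"
    by (rule sum.group[symmetric]) (auto simp: finS finite_mons3 intro: madd_mons3)
  also have "\<dots> = (\<Sum>m\<in>mons3 (d1 + d2). smult (mul d1 d2 f g m) (mX m p w))"
    unfolding mul_def smult_sum
    by (rule sum.cong[OF refl], rule sum.cong[OF refl]) auto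
  finally show ?thesis unfolding line_restr_alt by simp
qed

lemma LR_lin: "line_restr (Suc 0) (lin l) p w = [:dot3 l p, dot3 l w:]"
  unfolding line_restr_alt mons3_1
  by (cases l; cases p; cases w) (simp add: lin_def dot3_def algebra_simps)

lemma LR_one: "line_restr 0 one p w = 1"
  unfolding line_restr_alt mons3_0
  by (cases p; cases w) (simp add: one_def)

lemma LR_lpow: "line_restr k (lpow l k) p w = [:dot3 l p, dot3 l w:] ^ k"
proof (induction k)
  case 0 thus ?case by (simp add: LR_one)
next
  case (Suc k)
  have "line_restr (Suc k) (lpow l (Suc k)) p w = line_restr (Suc 0) (lin l) p w * line_restr k (lpow l k) p w"
    using LR_mul[of "Suc 0" k "lin l" "lpow l k" p w] by simp
  thus ?case using Suc by (simp add: LR_lin)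
qed

lemma ev_mul: "ev (d1 + d2) (mul d1 d2 f g) p = ev d1 f p * ev d2 g p"
  using arg_cong[OF LR_mul, of "\<lambda>r. coeff r 0"] by (simp add: LR0 coeff_mult_0)
lemma dd_mul: "dd (d1 + d2) (mul d1 d2 f g) p w = ev d1 f p * dd d2 g p w + dd d1 f p w * ev d2 g p"
  using arg_cong[OF LR_mul, of "\<lambda>r. coeff r (Suc 0)"] by (simp add: LR0 LR1 coeff_mult_1)

lemma mul_t2_left: "monom 1 2 dvd line_restr d1 f p w \<Longrightarrow> monom 1 2 dvd line_restr (d1 + d2) (mul d1 d2 f g) p w"
  by (simp add: LR_mul)

context fq
begin

lemma hp_F: "f \<in> hom_polys F d \<Longrightarrow> f m \<in> F"
  unfolding hom_polys_def by blast
lemma hp_out: "f \<in> hom_polys F d \<Longrightarrow> m \<notin> mons3 d \<Longrightarrow> f m = 0"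
  unfolding hom_polys_def by blast
lemma hp_Fall: "f \<in> hom_polys F d \<Longrightarrow> \<forall>m. f m \<in> F"
  unfolding hom_polys_def by blast

lemma hp_zero: "(\<lambda>m. 0) \<in> hom_polys F d" unfolding hom_polys_def using F0 by auto
lemma hp_add: "f \<in> hom_polys F d \<Longrightarrow> g \<in> hom_polys F d \<Longrightarrow> (\<lambda>m. f m + g m) \<in> hom_polys F d"
  unfolding hom_polys_def using Fadd by auto
lemma hp_diff: "f \<in> hom_polys F d \<Longrightarrow> g \<in> hom_polys F d \<Longrightarrow> (\<lambda>m. f m - g m) \<in> hom_polys F d"
  unfolding hom_polys_def using Fdiff by auto
lemma hp_smul: "c \<in> F \<Longrightarrow> f \<in> hom_polys F d \<Longrightarrow> smul c f \<in> hom_polys F d"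
  unfolding hom_polys_def smul_def using Fmult by auto
lemma hp_sum: assumes "\<And>i. i \<in> I \<Longrightarrow> g i \<in> hom_polys F d"
  shows "(\<lambda>m. \<Sum>i\<in>I. g i m) \<in> hom_polys F d"
  unfolding hom_polys_def mem_Collect_eq
proof (intro conjI allI impI)
  fix m show "(\<Sum>i\<in>I. g i m) \<in> F" using assms hp_F by (intro Fsum) blast
next
  fix m assume "m \<notin> mons3 d" thus "(\<Sum>i\<in>I. g i m) = 0" using assms hp_out by (intro sum.neutral) blast
qed
lemma mul_out: assumes m: "m \<notin> mons3 (d1 + d2)" shows "mul d1 d2 f g m = 0"
proof -
  have "{x \<in> mons3 d1 \<times> mons3 d2. madd (fst x) (snd x) = m} = {}"
  proof (rule equals0I)
    fix x assume x: "x \<in> {x \<in> mons3 d1 \<times> mons3 d2. madd (fst x) (snd x) = m}"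
    hence "fst x \<in> mons3 d1" "snd x \<in> mons3 d2" "madd (fst x) (snd x) = m" by auto
    hence "m \<in> mons3 (d1 + d2)" using madd_mons3 by metis
    thus False using m by simp
  qed
  thus ?thesis unfolding mul_def by (simp only: sum.empty)
qed

lemma hp_mul: assumes "f \<in> hom_polys F d1" "g \<in> hom_polys F d2"
  shows "mul d1 d2 f g \<in> hom_polys F (d1 + d2)"
proof -
  have 1: "mul d1 d2 f g m \<in> F" for m unfolding mul_def
    by (rule Fsum, rule Fmult[OF hp_F[OF assms(1)] hp_F[OF assms(2)]])
  show ?thesis unfolding hom_polys_def using 1 mul_out by blast
qed
lemma hp_lin: "Fvec F l \<Longrightarrow> lin l \<in> hom_polys F 1"
  unfolding hom_polys_def lin_def Fvec_def mons3_def using F0 by auto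
lemma hp_one: "one \<in> hom_polys F 0"
  unfolding hom_polys_def one_def mons3_def using F0 F1 by auto
lemma hp_lpow: "Fvec F l \<Longrightarrow> lpow l k \<in> hom_polys F k"
proof (induction k)
  case 0 thus ?case using hp_one by simp
next
  case (Suc k) thus ?case using hp_mul[OF hp_lin[OF Suc.prems] Suc.IH] by simp
qed

definition frQ :: "nat \<Rightarrow> 'k vec3 \<Rightarrow> 'k vec3" where
  "frQ i p = (fst p ^ (q ^ i), fst (snd p) ^ (q ^ i), snd (snd p) ^ (q ^ i))"

lemma frobv_iter: "(frobv q ^^ i) p = frQ i p"
proof (induction i)
  case 0 thus ?case by (simp add: frQ_def)
next
  case (Suc i) thus ?case by (simp add: frobv_def frQ_def power_mult[symmetric] mult.commute)
qed

lemma Fvec_frQ: "Fvec F p \<Longrightarrow> frQ i p = p"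
  unfolding Fvec_def frQ_def using F_pow_Q by (cases p) auto

lemma mv_frQ: "(mv m p) ^ (q ^ i) = mv m (frQ i p)"
  by (cases m; cases p) (simp add: frQ_def power_mult_distrib power_mult[symmetric] mult.commute)

lemma ofnat_Q: "(of_nat a :: 'k) ^ (q ^ i) = of_nat a"
  using F_pow_Q[OF Fof_nat] .

lemma mdv_frQ: "(mdv m p w) ^ (q ^ i) = mdv m (frQ i p) (frQ i w)"
  by (cases m; cases p; cases w) (simp add: frQ_def frobQ_add power_mult_distrib ofnat_Q
      power_mult[symmetric] mult.commute)

lemma ev_frQ: assumes "\<forall>m. f m \<in> F" shows "(ev d f p) ^ (q ^ i) = ev d f (frQ i p)"
  unfolding ev_def frobQ_sum
  by (rule sum.cong[OF refl]) (simp add: power_mult_distrib mv_frQ F_pow_Q assms)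

lemma dd_frQ: assumes "\<forall>m. f m \<in> F" shows "(dd d f p w) ^ (q ^ i) = dd d f (frQ i p) (frQ i w)"
  unfolding dd_def frobQ_sum
  by (rule sum.cong[OF refl]) (simp add: power_mult_distrib mdv_frQ F_pow_Q assms)

lemma ev_F: "\<forall>m. f m \<in> F \<Longrightarrow> Fvec F p \<Longrightarrow> ev d f p \<in> F"
  unfolding ev_def Fvec_def by (cases p) (auto intro!: Fsum Fmult Fpower)

lemma mdv_F: "Fvec F p \<Longrightarrow> Fvec F w \<Longrightarrow> mdv m p w \<in> F"
  unfolding Fvec_def by (cases m; cases p; cases w) (auto intro!: Fadd Fmult Fpower Fof_nat)

lemma dd_F: "\<forall>m. f m \<in> F \<Longrightarrow> Fvec F p \<Longrightarrow> Fvec F w \<Longrightarrow> dd d f p w \<in> F"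
  unfolding dd_def by (auto intro!: Fsum Fmult mdv_F)

end



lemma pcompose_monom_gen: "pcompose (monom c i) Q = smult c (Q ^ i)"
proof -
  have "pcompose ([:0, 1:] ^ i) Q = Q ^ i"
    by (induction i) (simp_all add: pcompose_mult pcompose_pCons pcompose_1)
  thus ?thesis unfolding monom_altdef by (simp add: pcompose_smult)
qed

lemma pcompose_as_sum: "degree R \<le> D \<Longrightarrow> pcompose R Q = (\<Sum>i\<le>D. smult (coeff R i) (Q ^ i))"
proof -
  assume "degree R \<le> D"
  hence "pcompose R Q = pcompose (\<Sum>i\<le>D. monom (coeff R i) i) Q"
    using poly_as_sum_of_monoms' by metis
  thus ?thesis by (simp add: pcompose_sum pcompose_monom_gen)
qed

lemma coeff_pcompose_shift0: "coeff (pcompose R [:x, 1:]) 0 = poly R x"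
  by (induction R) (simp_all add: pcompose_pCons coeff_mult_0)

lemma coeff_pcompose_shift1: "coeff (pcompose R [:x, 1:]) (Suc 0) = poly (pderiv R) x"
proof (induction R)
  case 0 thus ?case by simp
next
  case (pCons a p)
  have "coeff (pcompose (pCons a p) [:x, 1:]) (Suc 0) = x * coeff (pcompose p [:x,1:]) (Suc 0) + coeff (pcompose p [:x,1:]) 0"
    by (simp add: pcompose_pCons coeff_mult_1 coeff_mult_0)
  thus ?case using pCons coeff_pcompose_shift0 by (simp add: pderiv_pCons algebra_simps)
qed

lemma double_root: fixes R :: "'k::field poly" assumes "poly R x = 0" "poly (pderiv R) x = 0" shows "[:-x, 1:] ^ 2 dvd R"
proof -
  have "[:-x, 1:] dvd R" using assms(1) poly_eq_0_iff_dvd[THEN iffD1] by blast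
  then obtain S where S: "R = [:-x, 1:] * S" unfolding dvd_def by blast
  have "pderiv [:-x, 1:] = 1" by (simp add: pderiv_pCons)
  hence "pderiv R = [:-x, 1:] * pderiv S + S" unfolding S pderiv_mult by simp
  hence "poly S x = 0" using assms(2) by simp
  hence "[:-x, 1:] dvd S" using poly_eq_0_iff_dvd[THEN iffD1] by blast
  then obtain S' where S': "S = [:-x, 1:] * S'" unfolding dvd_def by blast
  have "R = [:-x, 1:] * ([:-x, 1:] * S')" using S S' by metis
  also have "\<dots> = [:-x, 1:] ^ 2 * S'" by (simp only: power2_eq_square mult.assoc)
  finally show ?thesis by (rule dvdI)
qed

lemma weighted_roots:
  fixes R :: "'k::field poly"
  assumes "finite X" "R \<noteq> 0" "\<forall>x\<in>X. [:-x, 1:] ^ k x dvd R"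
  shows "(\<Sum>x\<in>X. k x) \<le> degree R"
  using assms
proof (induction X arbitrary: R rule: finite_induct)
  case empty thus ?case by simp
next
  case (insert x X)
  have "[:-x, 1:] ^ k x dvd R" using insert.prems by blast
  then obtain S where S: "R = [:-x, 1:] ^ k x * S" unfolding dvd_def by blast
  have S0: "S \<noteq> 0" using S insert.prems by auto
  have "\<forall>y\<in>X. [:-y, 1:] ^ k y dvd S"
  proof
    fix y assume y: "y \<in> X"
    hence yx: "y \<noteq> x" using insert.hyps by auto
    have "poly ([:-x, 1:] ^ k x) y \<noteq> 0" using yx by simp
    hence o0: "order y ([:-x, 1:] ^ k x) = 0" by (rule order_0I)
    have "[:-y, 1:] ^ k y dvd R" using insert.prems y by auto
    hence "k y \<le> order y R" using order_divides insert.prems by blast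
    also have "order y R = order y S" unfolding S using order_mult[of "[:-x, 1:] ^ k x" S y] S0 o0 by simp
    finally show "[:-y, 1:] ^ k y dvd S" using order_divides by blast
  qed
  hence "(\<Sum>x\<in>X. k x) \<le> degree S" using insert.IH S0 by blast
  moreover have "degree R = k x + degree S" unfolding S using S0
    by (subst degree_mult_eq) (auto simp: degree_linear_power)
  ultimately show ?case using insert.hyps by simp
qed

context fq
begin

definition PF :: "nat \<Rightarrow> 'k poly set" where
  "PF D = {R. (\<forall>k. coeff R k \<in> F) \<and> degree R \<le> D}"

definition Eset :: "nat \<Rightarrow> 'k set" where
  "Eset e = {x. x ^ (q ^ e) = x}"

definition psi :: "'k \<Rightarrow> 'k poly \<Rightarrow> 'k \<times> 'k" where
  "psi \<theta> R = (poly R \<theta>, poly (pderiv R) \<theta>)"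

lemma poly_frQ: assumes "\<forall>k. coeff R k \<in> F" shows "(poly R x) ^ (q ^ i) = poly R (x ^ (q ^ i))"
  unfolding poly_altdef frobQ_sum
  by (rule sum.cong[OF refl]) (simp add: power_mult_distrib F_pow_Q assms power_mult[symmetric] mult.commute)

lemma pderiv_F: "\<forall>k. coeff R k \<in> F \<Longrightarrow> \<forall>k. coeff (pderiv R) k \<in> F"
  unfolding coeff_pderiv by (blast intro: Fmult Fof_nat)

lemma PF_diff: "R \<in> PF D \<Longrightarrow> S \<in> PF D \<Longrightarrow> R - S \<in> PF D"
  unfolding PF_def by (auto intro: Fdiff degree_diff_le)

lemma PF_mono: "D \<le> D' \<Longrightarrow> PF D \<subseteq> PF D'"
  unfolding PF_def by auto

definition emb :: "nat \<Rightarrow> (nat \<Rightarrow> 'k) \<Rightarrow> 'k poly" where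
  "emb D g = (\<Sum>i\<le>D. monom (g i) i)"

lemma coeff_emb: "coeff (emb D g) k = (if k \<le> D then g k else 0)"
  unfolding emb_def coeff_sum by (auto simp: coeff_monom)

lemma PF_eq: "PF D = emb D ` (PiE {..D} (\<lambda>_. F))"
proof
  show "PF D \<subseteq> emb D ` (PiE {..D} (\<lambda>_. F))"
  proof
    fix R assume R: "R \<in> PF D"
    have "(\<Sum>i\<le>D. monom (restrict (coeff R) {..D} i) i) = (\<Sum>i\<le>D. monom (coeff R i) i)"
      by (rule sum.cong) (auto simp: restrict_apply')
    hence "R = emb D (restrict (coeff R) {..D})"
      unfolding emb_def using R poly_as_sum_of_monoms'[of R D] unfolding PF_def by simp
    moreover have "restrict (coeff R) {..D} \<in> PiE {..D} (\<lambda>_. F)" using R unfolding PF_def by auto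
    ultimately show "R \<in> emb D ` (PiE {..D} (\<lambda>_. F))" by blast
  qed
  show "emb D ` (PiE {..D} (\<lambda>_. F)) \<subseteq> PF D"
  proof
    fix R assume "R \<in> emb D ` (PiE {..D} (\<lambda>_. F))"
    then obtain g where g: "g \<in> PiE {..D} (\<lambda>_. F)" "R = emb D g" by blast
    have "\<forall>k. coeff R k \<in> F" using g by (auto simp: coeff_emb F0)
    moreover have "degree R \<le> D" using g by (intro degree_le) (auto simp: coeff_emb)
    ultimately show "R \<in> PF D" unfolding PF_def by blast
  qed
qed

lemma emb_inj: "inj_on (emb D) (PiE {..D} (\<lambda>_. F))"
proof (rule inj_onI)
  fix g h assume g: "g \<in> PiE {..D} (\<lambda>_. F)" and h: "h \<in> PiE {..D} (\<lambda>_. F)" and e: "emb D g = emb D h"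
  show "g = h"
  proof
    fix k show "g k = h k"
    proof (cases "k \<le> D")
      case True thus ?thesis using arg_cong[OF e, of "\<lambda>R. coeff R k"] by (simp add: coeff_emb)
    next
      case False thus ?thesis using g h by (auto simp: PiE_def extensional_def)
    qed
  qed
qed

lemma card_PF: "card (PF D) = q ^ Suc D" and finite_PF: "finite (PF D)"
proof -
  have "card (PF D) = card (PiE {..D} (\<lambda>_. F))" unfolding PF_eq using card_image[OF emb_inj] .
  also have "\<dots> = q ^ Suc D" by (simp add: card_PiE cardF)
  finally show "card (PF D) = q ^ Suc D" .
  show "finite (PF D)" unfolding PF_eq using finF by (intro finite_imageI finite_PiE) auto
qed

lemma Eset_finite_card: assumes "e > 0" shows "finite (Eset e)" "card (Eset e) \<le> q ^ e"
proof -
  define h :: "'k poly" where "h = monom 1 (q ^ e) - [:0, 1:]"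
  have "q \<le> q ^ e" using q_ge2 assms by (intro self_le_power) auto
  hence qe: "q ^ e \<ge> 2" using q_ge2 by simp
  have dh: "degree h = q ^ e" unfolding h_def diff_conv_add_uminus
    by (subst degree_add_eq_left) (use qe in \<open>auto simp: degree_monom_eq\<close>)
  have h0: "h \<noteq> 0" proof assume "h = 0" hence "degree h = 0" by simp thus False using dh qe by linarith qed
  have "Eset e = {x. poly h x = 0}" unfolding Eset_def h_def by (simp add: poly_monom)
  thus "finite (Eset e)" "card (Eset e) \<le> q ^ e" using poly_roots_finite[OF h0] card_poly_roots_bound[OF h0] dh by auto
qed

lemma Eset_closed:
  shows "0 \<in> Eset e" "1 \<in> Eset e"
    "x \<in> Eset e \<Longrightarrow> y \<in> Eset e \<Longrightarrow> x + y \<in> Eset e"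
    "x \<in> Eset e \<Longrightarrow> y \<in> Eset e \<Longrightarrow> x - y \<in> Eset e"
    "x \<in> Eset e \<Longrightarrow> y \<in> Eset e \<Longrightarrow> x * y \<in> Eset e"
    "x \<in> Eset e \<Longrightarrow> y \<in> Eset e \<Longrightarrow> x / y \<in> Eset e"
  unfolding Eset_def using qpow_pos
  by (auto simp: frobQ_add frobQ_diff power_mult_distrib frobQ_divide zero_power)

lemma F_sub_Eset: "c \<in> F \<Longrightarrow> c \<in> Eset e"
  unfolding Eset_def using F_pow_Q by simp

lemma theta_periodic: fixes \<theta> :: 'k assumes "\<theta> ^ (q ^ e) = \<theta>" shows "\<theta> ^ (q ^ (e * k + r)) = \<theta> ^ (q ^ r)"
proof (induction k)
  case 0 thus ?case by simp
next
  case (Suc k)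
  have "q ^ (e * Suc k + r) = q ^ e * q ^ (e * k + r)" by (simp add: power_add[symmetric] add.assoc)
  hence "\<theta> ^ (q ^ (e * Suc k + r)) = \<theta> ^ (q ^ e * q ^ (e * k + r))" by simp
  also have "\<dots> = (\<theta> ^ (q ^ e)) ^ (q ^ (e * k + r))" by (rule power_mult)
  finally have "\<theta> ^ (q ^ (e * Suc k + r)) = (\<theta> ^ (q ^ e)) ^ (q ^ (e * k + r))" .
  thus ?case using Suc assms by simp
qed

lemma theta_mod: fixes \<theta> :: 'k assumes "\<theta> ^ (q ^ e) = \<theta>" shows "\<theta> ^ (q ^ i) = \<theta> ^ (q ^ (i mod e))"
  using theta_periodic[OF assms, of "i div e" "i mod e"] by simp

lemma theta_distinct: fixes \<theta> :: 'k
  assumes per: "\<theta> ^ (q ^ e) = \<theta>" and mn: "\<forall>j. 0 < j \<and> j < e \<longrightarrow> \<theta> ^ (q ^ j) \<noteq> \<theta>"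
  shows "inj_on (\<lambda>i. \<theta> ^ (q ^ i)) {..<e}"
proof -
  have *: "False" if ij: "i < j" "j < e" and eq: "\<theta> ^ (q ^ i) = \<theta> ^ (q ^ j)" for i j
  proof -
    have "(\<theta> ^ (q ^ i)) ^ (q ^ (e - j)) = (\<theta> ^ (q ^ j)) ^ (q ^ (e - j))" using eq by simp
    hence "\<theta> ^ (q ^ (i + (e - j))) = \<theta> ^ (q ^ (j + (e - j)))"
      by (simp add: power_mult[symmetric] power_add)
    also have "j + (e - j) = e" using ij by simp
    finally have "\<theta> ^ (q ^ (i + (e - j))) = \<theta>" using per by simp
    moreover have "0 < i + (e - j)" "i + (e - j) < e" using ij by auto
    ultimately show False using mn by blast
  qed
  show ?thesis
  proof (rule inj_onI)
    fix i j assume "i \<in> {..<e}" "j \<in> {..<e}" "\<theta> ^ (q ^ i) = \<theta> ^ (q ^ j)"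
    thus "i = j" using * by (metis lessThan_iff linorder_neqE_nat)
  qed
qed

lemma psi_diff: "psi \<theta> (R - S) = (fst (psi \<theta> R) - fst (psi \<theta> S), snd (psi \<theta> R) - snd (psi \<theta> S))"
  unfolding psi_def by (simp add: pderiv_diff)

context
  fixes \<theta> :: 'k and e :: nat
  assumes e_pos: "0 < e" and per: "\<theta> ^ (q ^ e) = \<theta>"
    and mn: "\<forall>j. 0 < j \<and> j < e \<longrightarrow> \<theta> ^ (q ^ j) \<noteq> \<theta>"
begin

lemma psi_in_E: assumes "R \<in> PF D" shows "psi \<theta> R \<in> Eset e \<times> Eset e"
proof -
  have cR: "\<forall>k. coeff R k \<in> F" using assms unfolding PF_def by blast
  have "(poly R \<theta>) ^ (q ^ e) = poly R \<theta>" using poly_frQ[OF cR] per by simp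
  moreover have "(poly (pderiv R) \<theta>) ^ (q ^ e) = poly (pderiv R) \<theta>" using poly_frQ[OF pderiv_F[OF cR]] per by simp
  ultimately show ?thesis unfolding psi_def Eset_def by simp
qed

lemma conj_double_roots:
  assumes cR: "\<forall>k. coeff R k \<in> F" and z: "psi \<theta> R = (0, 0)"
  shows "\<forall>x\<in>(\<lambda>i. \<theta> ^ (q ^ i)) ` {..<e}. [:-x, 1:] ^ 2 dvd R"
proof
  fix x assume "x \<in> (\<lambda>i. \<theta> ^ (q ^ i)) ` {..<e}"
  then obtain i where x: "x = \<theta> ^ (q ^ i)" by blast
  have "poly R x = (poly R \<theta>) ^ (q ^ i)" using poly_frQ[OF cR] x by simp
  hence 1: "poly R x = 0" using z qpow_pos unfolding psi_def by simp
  have "poly (pderiv R) x = (poly (pderiv R) \<theta>) ^ (q ^ i)" using poly_frQ[OF pderiv_F[OF cR]] x by simp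
  hence 2: "poly (pderiv R) x = 0" using z qpow_pos unfolding psi_def by simp
  show "[:-x, 1:] ^ 2 dvd R" using double_root[OF 1 2] .
qed

lemma card_conj: "card ((\<lambda>i. \<theta> ^ (q ^ i)) ` {..<e}) = e"
  using card_image[OF theta_distinct[OF per mn]] by simp

lemma kernel_degree: assumes cR: "\<forall>k. coeff R k \<in> F" and z: "psi \<theta> R = (0, 0)" and R0: "R \<noteq> 0"
  shows "2 * e \<le> degree R"
proof -
  have "(\<Sum>x\<in>(\<lambda>i. \<theta> ^ (q ^ i)) ` {..<e}. (2::nat)) \<le> degree R"
    using weighted_roots[OF _ R0, of "(\<lambda>i. \<theta> ^ (q ^ i)) ` {..<e}" "\<lambda>_. 2"] conj_double_roots[OF cR z] by auto
  thus ?thesis using card_conj by simp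
qed

lemma psi_inj: "inj_on (psi \<theta>) (PF (2 * e - 1))"
proof (rule inj_onI)
  fix R S assume R: "R \<in> PF (2 * e - 1)" and S: "S \<in> PF (2 * e - 1)" and eq: "psi \<theta> R = psi \<theta> S"
  have D: "R - S \<in> PF (2 * e - 1)" using PF_diff[OF R S] .
  have z: "psi \<theta> (R - S) = (0, 0)" using eq by (simp add: psi_diff)
  show "R = S"
  proof (rule ccontr)
    assume "R \<noteq> S"
    hence "2 * e \<le> degree (R - S)" using kernel_degree[OF _ z] D unfolding PF_def by auto
    thus False using D e_pos unfolding PF_def by auto
  qed
qed

lemma E_card_and_surj: "card (Eset e) = q ^ e" "psi \<theta> ` PF (2 * e - 1) = Eset e \<times> Eset e"
proof -
  have fE: "finite (Eset e)" and cE: "card (Eset e) \<le> q ^ e" using Eset_finite_card[OF e_pos] by auto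
  have sub: "psi \<theta> ` PF (2 * e - 1) \<subseteq> Eset e \<times> Eset e" using psi_in_E by blast
  have ci: "card (psi \<theta> ` PF (2 * e - 1)) = q ^ (2 * e)"
    using card_image[OF psi_inj] card_PF[of "2 * e - 1"] e_pos by simp
  have "card (Eset e \<times> Eset e) = card (Eset e) ^ 2" by (simp add: card_cartesian_product power2_eq_square)
  also have "\<dots> \<le> (q ^ e) ^ 2" using cE by (simp add: power_mono)
  also have "\<dots> = q ^ (2 * e)" by (simp add: power_mult[symmetric] mult.commute)
  finally have le: "card (Eset e \<times> Eset e) \<le> q ^ (2 * e)" .
  have fEE: "finite (Eset e \<times> Eset e)" using fE by simp
  have eqc: "card (psi \<theta> ` PF (2 * e - 1)) = card (Eset e \<times> Eset e)"
    using card_mono[OF fEE sub] ci le by simp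
  show "psi \<theta> ` PF (2 * e - 1) = Eset e \<times> Eset e" using card_subset_eq[OF fEE sub eqc] .
  have qq: "(q ^ e) ^ 2 = q ^ (2 * e)" by (simp add: power_mult[symmetric] mult.commute)
  have "card (Eset e \<times> Eset e) = card (Eset e) ^ 2" by (simp add: card_cartesian_product power2_eq_square)
  hence "card (Eset e) ^ 2 = (q ^ e) ^ 2" using eqc ci qq by simp
  thus "card (Eset e) = q ^ e" using power_eq_iff_eq_base[of 2 "card (Eset e)" "q ^ e"] by simp
qed

lemma kernel_exists:
  "\<exists>R0 \<in> PF (2 * e). R0 \<noteq> 0 \<and> psi \<theta> R0 = (0, 0) \<and> degree R0 = 2 * e \<and>
     (\<forall>\<phi>. poly R0 \<phi> = 0 \<longrightarrow> (\<exists>i<e. \<phi> = \<theta> ^ (q ^ i)))"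
proof -
  have fE: "finite (Eset e)" using Eset_finite_card[OF e_pos] by auto
  have cEE: "card (Eset e \<times> Eset e) = q ^ (2 * e)"
    using E_card_and_surj(1) by (simp add: card_cartesian_product power_mult[symmetric] mult_2 power_add)
  have ninj: "\<not> inj_on (psi \<theta>) (PF (2 * e))"
  proof
    assume inj: "inj_on (psi \<theta>) (PF (2 * e))"
    have "card (psi \<theta> ` PF (2 * e)) = q ^ Suc (2 * e)" using card_image[OF inj] card_PF by simp
    moreover have "card (psi \<theta> ` PF (2 * e)) \<le> card (Eset e \<times> Eset e)"
    proof (rule card_mono)
      show "finite (Eset e \<times> Eset e)" using fE by simp
      show "psi \<theta> ` PF (2 * e) \<subseteq> Eset e \<times> Eset e" using psi_in_E by blast
    qed
    ultimately have "q ^ Suc (2 * e) \<le> q ^ (2 * e)" using cEE by simp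
    thus False using q_ge2 by simp
  qed
  then obtain R S where RS: "R \<in> PF (2 * e)" "S \<in> PF (2 * e)" "R \<noteq> S" "psi \<theta> R = psi \<theta> S"
    unfolding inj_on_def by blast
  define R0 where "R0 = R - S"
  have R0PF: "R0 \<in> PF (2 * e)" unfolding R0_def using PF_diff RS by blast
  have cR: "\<forall>k. coeff R0 k \<in> F" using R0PF unfolding PF_def by blast
  have nz: "R0 \<noteq> 0" unfolding R0_def using RS by simp
  have z: "psi \<theta> R0 = (0, 0)" unfolding R0_def using RS by (simp add: psi_diff)
  have deg: "degree R0 = 2 * e" using kernel_degree[OF cR z nz] R0PF unfolding PF_def by simp
  have roots: "\<exists>i<e. \<phi> = \<theta> ^ (q ^ i)" if p: "poly R0 \<phi> = 0" for \<phi>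
  proof (rule ccontr)
    assume "\<not> (\<exists>i<e. \<phi> = \<theta> ^ (q ^ i))"
    hence nin: "\<phi> \<notin> (\<lambda>i. \<theta> ^ (q ^ i)) ` {..<e}" by auto
    let ?C = "(\<lambda>i. \<theta> ^ (q ^ i)) ` {..<e}"
    let ?k = "\<lambda>x. if x = \<phi> then 1 else (2::nat)"
    have "\<forall>x\<in>insert \<phi> ?C. [:-x, 1:] ^ ?k x dvd R0"
    proof
      fix x assume x: "x \<in> insert \<phi> ?C"
      show "[:-x, 1:] ^ ?k x dvd R0"
      proof (cases "x = \<phi>")
        case True thus ?thesis using p poly_eq_0_iff_dvd[THEN iffD1, OF p] by simp
      next
        case False thus ?thesis using x conj_double_roots[OF cR z] by auto
      qed
    qed
    hence "(\<Sum>x\<in>insert \<phi> ?C. ?k x) \<le> degree R0" by (intro weighted_roots nz) auto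
    moreover have "(\<Sum>x\<in>insert \<phi> ?C. ?k x) = 1 + (\<Sum>x\<in>?C. ?k x)" using nin by simp
    moreover have "(\<Sum>x\<in>?C. ?k x) = (\<Sum>x\<in>?C. 2)" using nin by (intro sum.cong) auto
    ultimately show False using card_conj deg by simp
  qed
  show ?thesis using R0PF nz z deg roots by blast
qed

end

end



lemma dot3_lc: "dot3 l (lc \<alpha> x \<beta> y) = \<alpha> * dot3 l x + \<beta> * dot3 l y"
  unfolding dot3_def lc_def by (simp add: algebra_simps)

lemma dot3_scale: "dot3 l (scale3 c x) = c * dot3 l x"
  unfolding dot3_def scale3_def by (simp add: algebra_simps)

lemma lc_comm: "lc \<alpha> x \<beta> y = lc \<beta> y \<alpha> x"
  unfolding lc_def by (simp add: add.commute)

lemma lc_scale1: "\<alpha> \<noteq> 0 \<Longrightarrow> lc \<alpha> a \<beta> b = scale3 \<alpha> (lc 1 a (\<beta> / \<alpha>) b)"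
  unfolding lc_def scale3_def by (simp add: algebra_simps)

lemma lc_zero_left: "lc 0 a \<beta> b = scale3 \<beta> b"
  unfolding lc_def scale3_def by simp

lemma scale3_scale3: "scale3 c (scale3 c' x) = scale3 (c * c') x"
  unfolding scale3_def by (simp add: mult.assoc)

lemma scale3_1: "scale3 1 x = x"
  unfolding scale3_def by simp

lemma scale3_nz: "c \<noteq> 0 \<Longrightarrow> x \<noteq> (0,0,0) \<Longrightarrow> scale3 c x \<noteq> (0,0,0)"
  unfolding scale3_def by (cases x) auto

lemma prop_sym: "proportional u v \<Longrightarrow> proportional v u"
  unfolding proportional_def
proof -
  assume "\<exists>c. c \<noteq> 0 \<and> v = scale3 c u"
  then obtain c where c: "c \<noteq> 0" "v = scale3 c u" by blast
  hence "u = scale3 (1 / c) v" by (simp add: scale3_scale3 scale3_1)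
  thus "\<exists>c. c \<noteq> 0 \<and> u = scale3 c v" using c by (intro exI[of _ "1 / c"]) simp
qed

lemma prop_trans: "proportional u v \<Longrightarrow> proportional v w \<Longrightarrow> proportional u w"
  unfolding proportional_def by (metis mult_eq_0_iff scale3_scale3)

lemma ppt_scale: "c \<noteq> 0 \<Longrightarrow> ppt (scale3 c x) = ppt x"
  unfolding ppt_def
proof (intro equalityI subsetI)
  fix y assume c: "c \<noteq> 0" and "y \<in> {scale3 c' (scale3 c x) |c'. c' \<noteq> 0}"
  then obtain c' where "c' \<noteq> 0" "y = scale3 (c' * c) x" by (auto simp: scale3_scale3)
  thus "y \<in> {scale3 c x |c. c \<noteq> 0}" using c by auto
next
  fix y assume c: "c \<noteq> 0" and "y \<in> {scale3 c x |c. c \<noteq> 0}"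
  then obtain c' where c': "c' \<noteq> 0" "y = scale3 c' x" by auto
  hence "y = scale3 (c' / c) (scale3 c x)" using c by (simp add: scale3_scale3)
  thus "y \<in> {scale3 c' (scale3 c x) |c'. c' \<noteq> 0}" using c c' by auto
qed

lemma ppt_eq_prop: "ppt x = ppt y \<Longrightarrow> proportional y x"
proof -
  assume "ppt x = ppt y"
  moreover have "x \<in> ppt x" unfolding ppt_def using scale3_1[of x] by (metis (mono_tags, lifting) mem_Collect_eq one_neq_zero)
  ultimately have "x \<in> ppt y" by simp
  thus ?thesis unfolding ppt_def proportional_def by auto
qed

context fq
begin

lemma frQ_scale: "frQ i (scale3 c p) = scale3 (c ^ (q ^ i)) (frQ i p)"
  unfolding frQ_def scale3_def by (simp add: power_mult_distrib)

lemma frQ_lc: "Fvec F a \<Longrightarrow> Fvec F b \<Longrightarrow> frQ i (lc \<alpha> a \<beta> b) = lc (\<alpha> ^ (q ^ i)) a (\<beta> ^ (q ^ i)) b"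
  unfolding frQ_def lc_def Fvec_def by (cases a; cases b) (simp add: frobQ_add power_mult_distrib F_pow_Q)

lemma frQ_frQ: "frQ i (frQ j p) = frQ (j + i) p"
  unfolding frQ_def by (simp add: power_mult[symmetric] power_add)

lemma frQ_0: "frQ 0 p = p" unfolding frQ_def by simp

lemma dot3_frQ: "Fvec F l \<Longrightarrow> dot3 l (frQ i p) = (dot3 l p) ^ (q ^ i)"
  unfolding dot3_def frQ_def Fvec_def by (cases l; cases p) (simp add: frobQ_add power_mult_distrib F_pow_Q)

lemma cpt_prop: fixes v w :: "'k vec3" assumes "proportional v w" shows "cpt q v = cpt q w"
proof -
  obtain c where c: "c \<noteq> 0" "w = scale3 c v" using assms unfolding proportional_def by blast
  have "ppt ((frobv q ^^ i) w) = ppt ((frobv q ^^ i) v)" for i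
    unfolding frobv_iter c(2) frQ_scale using c(1) by (simp add: ppt_scale)
  thus ?thesis unfolding cpt_def by simp
qed

lemma frQ_periodic: assumes "frQ e u = u" shows "frQ (e * k + r) u = frQ r u"
proof (induction k)
  case 0 thus ?case by simp
next
  case (Suc k)
  have "frQ (e * Suc k + r) u = frQ (e * k + r) (frQ e u)" by (simp add: frQ_frQ algebra_simps)
  thus ?case using Suc assms by simp
qed

lemma cpt_shift: assumes "frQ e u = u" "0 < e" shows "cpt q (frQ j u) = cpt q u"
proof -
  have "{ppt ((frobv q ^^ i) (frQ j u)) |i. True} = {ppt ((frobv q ^^ i) u) |i. True}"
  proof (intro equalityI subsetI)
    fix x assume "x \<in> {ppt ((frobv q ^^ i) (frQ j u)) |i. True}"
    then obtain i where "x = ppt (frQ (j + i) u)" by (auto simp: frobv_iter frQ_frQ)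
    thus "x \<in> {ppt ((frobv q ^^ i) u) |i. True}" by (auto simp: frobv_iter)
  next
    fix x assume "x \<in> {ppt ((frobv q ^^ i) u) |i. True}"
    then obtain i where x: "x = ppt (frQ i u)" by (auto simp: frobv_iter)
    have "j + (i + (e - 1) * j) = e * j + i" using assms(2) by (cases e) (simp_all add: algebra_simps)
    hence "frQ (j + (i + (e - 1) * j)) u = frQ (e * j + i) u" by (rule arg_cong)
    also have "\<dots> = frQ i u" using frQ_periodic[OF assms(1)] by simp
    finally have "x = ppt ((frobv q ^^ (i + (e - 1) * j)) (frQ j u))" using x by (simp add: frobv_iter frQ_frQ)
    thus "x \<in> {ppt ((frobv q ^^ i) (frQ j u)) |i. True}" by blast
  qed
  thus ?thesis unfolding cpt_def .
qed

definition chart :: "'k vec3 \<Rightarrow> 'k vec3 \<Rightarrow> 'k vec3 \<Rightarrow> 'k vec3 \<Rightarrow> 'k vec3 \<Rightarrow> bool" where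
  "chart l a b la lb \<longleftrightarrow> Fvec F a \<and> Fvec F b \<and> Fvec F la \<and> Fvec F lb \<and> dot3 l a = 0 \<and> dot3 l b = 0
     \<and> dot3 la a = 1 \<and> dot3 la b = 0 \<and> dot3 lb a = 0 \<and> dot3 lb b = 1
     \<and> (\<forall>w. dot3 l w = 0 \<longrightarrow> w = lc (dot3 la w) a (dot3 lb w) b)"

lemma chart_swap: "chart l a b la lb \<Longrightarrow> chart l b a lb la"
  unfolding chart_def using lc_comm by metis

lemma chart_exists: assumes "Fvec F l" "l \<noteq> (0,0,0)" shows "\<exists>a b la lb. chart l a b la lb"
proof -
  obtain l1 l2 l3 where l: "l = (l1, l2, l3)" by (cases l)
  have F: "l1 \<in> F" "l2 \<in> F" "l3 \<in> F" using assms(1) l unfolding Fvec_def by auto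
  consider "l3 \<noteq> 0" | "l3 = 0" "l2 \<noteq> 0" | "l3 = 0" "l2 = 0" "l1 \<noteq> 0" using assms(2) l by auto
  thus ?thesis
  proof cases
    case 1
    have "chart l (l3, 0, - l1) (0, l3, - l2) (1 / l3, 0, 0) (0, 1 / l3, 0)"
      unfolding chart_def Fvec_def l using 1 F
      by (auto simp: dot3_def lc_def F0 Fuminus Fdivide F1 field_simps; algebra)
    thus ?thesis by blast
  next
    case 2
    have "chart l (l2, - l1, 0) (0, - l3, l2) (1 / l2, 0, 0) (0, 0, 1 / l2)"
      unfolding chart_def Fvec_def l using 2 F
      by (auto simp: dot3_def lc_def F0 Fuminus Fdivide F1 field_simps; algebra)
    thus ?thesis by blast
  next
    case 3
    have "chart l (- l2, l1, 0) (- l3, 0, l1) (0, 1 / l1, 0) (0, 0, 1 / l1)"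
      unfolding chart_def Fvec_def l using 3 F
      by (auto simp: dot3_def lc_def F0 Fuminus Fdivide F1 field_simps; algebra)
    thus ?thesis by blast
  qed
qed

lemma chart_coord: assumes "chart l a b la lb" "lc 1 a x b = scale3 c (lc 1 a y b)"
  shows "c = 1" "x = y"
proof -
  have "dot3 la (lc 1 a x b) = dot3 la (scale3 c (lc 1 a y b))" using assms(2) by simp
  thus c1: "c = 1" using assms(1) unfolding chart_def by (simp add: dot3_lc dot3_scale)
  have "dot3 lb (lc 1 a x b) = dot3 lb (scale3 c (lc 1 a y b))" using assms(2) by simp
  thus "x = y" using assms(1) c1 unfolding chart_def by (simp add: dot3_lc dot3_scale)
qed

definition qdata :: "'k vec3 \<Rightarrow> 'k vec3 \<Rightarrow> 'k vec3 \<Rightarrow> 'k vec3 \<Rightarrow> 'k vec3 \<Rightarrow> 'k vec3 \<Rightarrow> bool" where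
  "qdata Q b1 b2 m0 m1 m2 \<longleftrightarrow> Fvec F Q \<and> Fvec F b1 \<and> Fvec F b2 \<and> Fvec F m0 \<and> Fvec F m1 \<and> Fvec F m2
    \<and> dot3 m0 Q = 1 \<and> dot3 m0 b1 = 0 \<and> dot3 m0 b2 = 0
    \<and> dot3 m1 Q = 0 \<and> dot3 m1 b1 = 1 \<and> dot3 m1 b2 = 0
    \<and> dot3 m2 Q = 0 \<and> dot3 m2 b1 = 0 \<and> dot3 m2 b2 = 1
    \<and> (\<forall>w. w = lc (dot3 m0 w) Q 1 (lc (dot3 m1 w) b1 (dot3 m2 w) b2))"

lemma qdata_exists: assumes "Fvec F Q" "Q \<noteq> (0,0,0)" shows "\<exists>b1 b2 m0 m1 m2. qdata Q b1 b2 m0 m1 m2"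
proof -
  obtain x y z where Q: "Q = (x, y, z)" by (cases Q)
  have F: "x \<in> F" "y \<in> F" "z \<in> F" using assms(1) Q unfolding Fvec_def by auto
  consider "x \<noteq> 0" | "x = 0" "y \<noteq> 0" | "x = 0" "y = 0" "z \<noteq> 0" using assms(2) Q by auto
  thus ?thesis
  proof cases
    case 1
    have "qdata Q (0,1,0) (0,0,1) (1/x, 0, 0) (- y / x, 1, 0) (- z / x, 0, 1)"
      unfolding qdata_def Fvec_def Q using 1 F
      by (auto simp: dot3_def lc_def F0 Fuminus Fdivide F1 field_simps)
    thus ?thesis by blast
  next
    case 2
    have "qdata Q (1,0,0) (0,0,1) (0, 1/y, 0) (1, - x / y, 0) (0, - z / y, 1)"
      unfolding qdata_def Fvec_def Q using 2 F
      by (auto simp: dot3_def lc_def F0 Fuminus Fdivide F1 field_simps)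
    thus ?thesis by blast
  next
    case 3
    have "qdata Q (1,0,0) (0,1,0) (0, 0, 1/z) (1, 0, - x / z) (0, 1, - y / z)"
      unfolding qdata_def Fvec_def Q using 3 F
      by (auto simp: dot3_def lc_def F0 Fuminus Fdivide F1 field_simps)
    thus ?thesis by blast
  qed
qed

lemma sing_iff: assumes "qdata Q b1 b2 m0 m1 m2"
  shows "singular_at d f Q \<longleftrightarrow> ev d f Q = 0 \<and> dd d f Q b1 = 0 \<and> dd d f Q b2 = 0"
proof
  assume "singular_at d f Q"
  thus "ev d f Q = 0 \<and> dd d f Q b1 = 0 \<and> dd d f Q b2 = 0"
    unfolding singular_at_def LR_t2_iff by blast
next
  assume h: "ev d f Q = 0 \<and> dd d f Q b1 = 0 \<and> dd d f Q b2 = 0"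
  have "dd d f Q w = 0" for w
  proof -
    have "w = lc (dot3 m0 w) Q 1 (lc (dot3 m1 w) b1 (dot3 m2 w) b2)" using assms unfolding qdata_def by blast
    hence "dd d f Q w = dot3 m0 w * dd d f Q Q + (dot3 m1 w * dd d f Q b1 + dot3 m2 w * dd d f Q b2)"
      by (metis dd_lc mult_1)
    thus ?thesis using h by (simp add: dd_euler)
  qed
  thus "singular_at d f Q" unfolding singular_at_def LR_t2_iff using h by blast
qed

lemma tan_iff:
  assumes ch: "chart l a b la lb" and pr: "proportional v (lc 1 a \<theta> b)"
    and fF: "\<forall>m. f m \<in> F" and lF: "Fvec F l"
  shows "tangent_at q d f l v \<longleftrightarrow> ev d f (lc 1 a \<theta> b) = 0 \<and> dd d f (lc 1 a \<theta> b) b = 0"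
proof -
  let ?u = "lc 1 a \<theta> b"
  obtain c where c: "c \<noteq> 0" "?u = scale3 c v" using pr unfolding proportional_def by blast
  have aF: "Fvec F a" and bF: "Fvec F b" using ch unfolding chart_def by auto
  show ?thesis
  proof
    assume t: "tangent_at q d f l v"
    have lb: "dot3 l b = 0" using ch unfolding chart_def by blast
    have b0: "b \<noteq> (0,0,0)"
    proof
      assume "b = (0,0,0)" hence "dot3 lb b = 0" by (simp add: dot3_def)
      thus False using ch unfolding chart_def by simp
    qed
    have npr: "\<not> proportional v b"
    proof
      assume "proportional v b"
      hence "proportional ?u b" using prop_trans prop_sym pr by blast
      then obtain c' where c': "c' \<noteq> 0" "b = scale3 c' ?u" unfolding proportional_def by blast
      have "dot3 la b = dot3 la (scale3 c' ?u)" using c'(2) by (rule arg_cong)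
      also have "\<dots> = c' * dot3 la ?u" by (rule dot3_scale)
      finally have "dot3 la b = c' * dot3 la ?u" .
      thus False using ch c' unfolding chart_def by (simp add: dot3_lc)
    qed
    have t': "dot3 l b = 0 \<and> b \<noteq> (0,0,0) \<and> \<not> proportional ((frobv q ^^ 0) v) b
        \<longrightarrow> monom 1 2 dvd line_restr d f ((frobv q ^^ 0) v) b"
      using t unfolding tangent_at_def by blast
    have "monom 1 2 dvd line_restr d f ((frobv q ^^ 0) v) b"
      using t' lb b0 npr by simp
    hence "ev d f v = 0" "dd d f v b = 0" unfolding LR_t2_iff by auto
    thus "ev d f ?u = 0 \<and> dd d f ?u b = 0" using c by (simp add: ev_scale dd_scale)
  next
    assume h: "ev d f ?u = 0 \<and> dd d f ?u b = 0"
    show "tangent_at q d f l v" unfolding tangent_at_def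
    proof (intro allI impI)
      fix i w assume w: "dot3 l w = 0 \<and> w \<noteq> (0,0,0) \<and> \<not> proportional ((frobv q ^^ i) v) w"
      let ?ui = "lc 1 a (\<theta> ^ (q ^ i)) b"
      have ui: "frQ i ?u = ?ui" using frQ_lc[OF aF bF] by simp
      have ev0: "ev d f ?ui = 0" using ev_frQ[OF fF, of d ?u i] h ui qpow_pos by (simp add: zero_power)
      have ddb: "dd d f ?ui b = 0" using dd_frQ[OF fF, of d ?u b i] h ui Fvec_frQ[OF bF] qpow_pos by (simp add: zero_power)
      have "dd d f ?ui ?ui = 1 * dd d f ?ui a + \<theta> ^ (q ^ i) * dd d f ?ui b" by (rule dd_lc)
      hence dda: "dd d f ?ui a = 0" using ev0 ddb by (simp add: dd_euler)
      have "w = lc (dot3 la w) a (dot3 lb w) b" using ch w unfolding chart_def by blast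
      hence ddw: "dd d f ?ui w = 0" using dda ddb by (metis dd_lc mult_zero_right add_0)
      have pi: "(frobv q ^^ i) v = scale3 (1 / c ^ (q ^ i)) ?ui"
      proof -
        have "?ui = frQ i (scale3 c v)" using ui c by simp
        also have "\<dots> = scale3 (c ^ (q ^ i)) (frQ i v)" by (rule frQ_scale)
        finally show ?thesis using c(1) by (simp add: scale3_scale3 scale3_1 frobv_iter)
      qed
      show "monom 1 2 dvd line_restr d f ((frobv q ^^ i) v) w"
        unfolding LR_t2_iff pi ev_scale dd_scale using ev0 ddw by simp
    qed
  qed
qed

end



definition GR :: "nat \<Rightarrow> 'k::field vec3 \<Rightarrow> 'k vec3 \<Rightarrow> 'k poly \<Rightarrow> mono3 \<Rightarrow> 'k" where
  "GR D la lb R = (\<lambda>m. \<Sum>i\<le>D. smul (coeff R i) (mul (D - i) i (lpow la (D - i)) (lpow lb i)) m)"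

lemma LR_GR: "line_restr D (GR D la lb R) p w =
   (\<Sum>i\<le>D. smult (coeff R i) ([:dot3 la p, dot3 la w:] ^ (D - i) * [:dot3 lb p, dot3 lb w:] ^ i))"
  unfolding GR_def LR_sum
proof (rule sum.cong[OF refl])
  fix i assume i: "i \<in> {..D}"
  have D: "D = (D - i) + i" using i by simp
  have "line_restr D (mul (D - i) i (lpow la (D - i)) (lpow lb i)) p w
      = line_restr ((D - i) + i) (mul (D - i) i (lpow la (D - i)) (lpow lb i)) p w" using D by simp
  also have "\<dots> = [:dot3 la p, dot3 la w:] ^ (D - i) * [:dot3 lb p, dot3 lb w:] ^ i"
    by (simp add: LR_mul LR_lpow)
  finally show "line_restr D (smul (coeff R i) (mul (D - i) i (lpow la (D - i)) (lpow lb i))) p w =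
      smult (coeff R i) ([:dot3 la p, dot3 la w:] ^ (D - i) * [:dot3 lb p, dot3 lb w:] ^ i)"
    by (simp add: LR_smul)
qed

lemma ev_GR: "ev D (GR D la lb R) x = (\<Sum>i\<le>D. coeff R i * (dot3 la x) ^ (D - i) * (dot3 lb x) ^ i)"
  using arg_cong[OF LR_GR[of D la lb R x x], of "\<lambda>r. coeff r 0"]
  by (simp add: LR0 coeff_sum coeff_mult_0 coeff_lin_pow0 mult.assoc)

lemma poly_le: fixes R :: "'k::field poly" shows "degree R \<le> D \<Longrightarrow> poly R x = (\<Sum>i\<le>D. coeff R i * x ^ i)"
proof -
  assume "degree R \<le> D"
  hence "poly R x = poly (\<Sum>i\<le>D. monom (coeff R i) i) x" using poly_as_sum_of_monoms' by metis
  thus ?thesis by (simp add: poly_sum poly_monom)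
qed

lemma ev_GR_nz: assumes "degree R \<le> D" "dot3 la x \<noteq> 0"
  shows "ev D (GR D la lb R) x = (dot3 la x) ^ D * poly R (dot3 lb x / dot3 la x)"
proof -
  let ?a = "dot3 la x" and ?b = "dot3 lb x"
  have "ev D (GR D la lb R) x = (\<Sum>i\<le>D. coeff R i * ?a ^ (D - i) * ?b ^ i)" by (rule ev_GR)
  also have "\<dots> = (\<Sum>i\<le>D. ?a ^ D * (coeff R i * (?b / ?a) ^ i))"
  proof (rule sum.cong[OF refl])
    fix i assume i: "i \<in> {..D}"
    have "?a ^ D = ?a ^ (D - i) * ?a ^ i" using i by (simp add: power_add[symmetric])
    thus "coeff R i * ?a ^ (D - i) * ?b ^ i = ?a ^ D * (coeff R i * (?b / ?a) ^ i)"
      using assms(2) by (simp add: power_divide field_simps)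
  qed
  also have "\<dots> = ?a ^ D * poly R (?b / ?a)" using poly_le[OF assms(1)] by (simp add: sum_distrib_left)
  finally show ?thesis .
qed

lemma ev_GR_z: assumes "dot3 la x = 0"
  shows "ev D (GR D la lb R) x = coeff R D * (dot3 lb x) ^ D"
proof -
  have "ev D (GR D la lb R) x = (\<Sum>i\<le>D. coeff R i * 0 ^ (D - i) * (dot3 lb x) ^ i)"
    unfolding ev_GR assms by (rule refl)
  also have "\<dots> = (\<Sum>i\<le>D. if i = D then coeff R D * (dot3 lb x) ^ D else 0)"
    by (rule sum.cong[OF refl]) auto
  finally show ?thesis by simp
qed

definition kills :: "nat \<Rightarrow> (mono3 \<Rightarrow> 'k::field) \<Rightarrow> ('k vec3 \<times> 'k vec3) set \<Rightarrow> bool" where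
  "kills d H S \<longleftrightarrow> (\<forall>pw\<in>S. monom 1 2 dvd line_restr d H (fst pw) (snd pw))"

lemma kills_mul_left: "kills d1 f S \<Longrightarrow> kills (d1 + d2) (mul d1 d2 f g) S"
  unfolding kills_def by (simp add: LR_mul)
lemma kills_mul_right: "kills d2 g S \<Longrightarrow> kills (d1 + d2) (mul d1 d2 f g) S"
  unfolding kills_def by (simp add: LR_mul)
lemma kills_iff: "kills d f S \<longleftrightarrow> (\<forall>pw\<in>S. ev d f (fst pw) = 0 \<and> dd d f (fst pw) (snd pw) = 0)"
  unfolding kills_def LR_t2_iff ..
lemma kills_Un: "kills d f (S \<union> S') \<longleftrightarrow> kills d f S \<and> kills d f S'"
  unfolding kills_def by blast
lemma kills_UN: "kills d f (\<Union>i\<in>I. S i) \<longleftrightarrow> (\<forall>i\<in>I. kills d f (S i))"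
  unfolding kills_def by blast

lemma ev_lin: "ev (Suc 0) (lin l) p = dot3 l p"
  using arg_cong[OF LR_lin[of l p p], of "\<lambda>r. coeff r 0"] by (simp add: LR0)
lemma dd_lin: "dd (Suc 0) (lin l) p w = dot3 l w"
  using arg_cong[OF LR_lin[of l p w], of "\<lambda>r. coeff r (Suc 0)"] by (simp add: LR1)
lemma ev_lpow: "ev k (lpow l k) p = (dot3 l p) ^ k"
  using arg_cong[OF LR_lpow[of k l p p], of "\<lambda>r. coeff r 0"] by (simp add: LR0 coeff_lin_pow0)
lemma dd_lpow: "dd k (lpow l k) p w = of_nat k * (dot3 l p) ^ (k - 1) * dot3 l w"
  using arg_cong[OF LR_lpow[of k l p w], of "\<lambda>r. coeff r (Suc 0)"] by (simp add: LR1 coeff_lin_pow1)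
lemma ev_one: "ev 0 one p = 1"
  using arg_cong[OF LR_one[of p p], of "\<lambda>r. coeff r 0"] by (simp add: LR0)

context fq
begin

lemma hp_GR: assumes "Fvec F la" "Fvec F lb" "\<forall>k. coeff R k \<in> F"
  shows "GR D la lb R \<in> hom_polys F D"
  unfolding GR_def
proof (rule hp_sum)
  fix i assume i: "i \<in> {..D}"
  have "mul (D - i) i (lpow la (D - i)) (lpow lb i) \<in> hom_polys F ((D - i) + i)"
    by (intro hp_mul hp_lpow assms)
  hence "mul (D - i) i (lpow la (D - i)) (lpow lb i) \<in> hom_polys F D" using i by simp
  thus "smul (coeff R i) (mul (D - i) i (lpow la (D - i)) (lpow lb i)) \<in> hom_polys F D"
    using assms(3) by (intro hp_smul) auto
qed

lemma GR_at_u: assumes ch: "chart l a b la lb" and dR: "degree R \<le> D"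
  shows "ev D (GR D la lb R) (lc 1 a \<theta> b) = poly R \<theta>"
    "dd D (GR D la lb R) (lc 1 a \<theta> b) b = poly (pderiv R) \<theta>"
proof -
  have d: "dot3 la (lc 1 a \<theta> b) = 1" "dot3 la b = 0" "dot3 lb (lc 1 a \<theta> b) = \<theta>" "dot3 lb b = 1"
    using ch unfolding chart_def by (auto simp: dot3_lc)
  have "line_restr D (GR D la lb R) (lc 1 a \<theta> b) b = (\<Sum>i\<le>D. smult (coeff R i) ([:\<theta>, 1:] ^ i))"
    unfolding LR_GR d by (simp add: pCons_one)
  also have "\<dots> = pcompose R [:\<theta>, 1:]" using pcompose_as_sum[OF dR] by simp
  finally have L: "line_restr D (GR D la lb R) (lc 1 a \<theta> b) b = pcompose R [:\<theta>, 1:]" .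
  show "ev D (GR D la lb R) (lc 1 a \<theta> b) = poly R \<theta>"
    using arg_cong[OF L, of "\<lambda>r. coeff r 0"] by (simp add: LR0 coeff_pcompose_shift0)
  show "dd D (GR D la lb R) (lc 1 a \<theta> b) b = poly (pderiv R) \<theta>"
    using arg_cong[OF L, of "\<lambda>r. coeff r (Suc 0)"] by (simp add: LR1 coeff_pcompose_shift1)
qed

lemma blockP_exists:
  fixes v l :: "'k vec3"
  assumes cr: "closed_rep q v" and lF: "Fvec F l" and l0: "l \<noteq> (0,0,0)" and on: "dot3 l v = 0"
  shows "\<exists>a b la lb \<theta> e. chart l a b la lb \<and> proportional v (lc 1 a \<theta> b) \<and> 0 < e \<and> \<theta> ^ (q ^ e) = \<theta>
     \<and> (\<forall>j. 0 < j \<and> j < e \<longrightarrow> \<theta> ^ (q ^ j) \<noteq> \<theta>) \<and> cdeg q v = e"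
proof -
  have v0: "v \<noteq> (0,0,0)" using cr unfolding closed_rep_def by blast
  obtain a0 b0 la0 lb0 where ch0: "chart l a0 b0 la0 lb0" using chart_exists[OF lF l0] by blast
  have "\<exists>a b la lb. chart l a b la lb \<and> dot3 la v \<noteq> 0"
  proof (cases "dot3 la0 v = 0")
    case False thus ?thesis using ch0 by blast
  next
    case True
    have "v = lc (dot3 la0 v) a0 (dot3 lb0 v) b0" using ch0 on unfolding chart_def by blast
    hence "v = scale3 (dot3 lb0 v) b0" using True by (simp add: lc_zero_left)
    hence "dot3 lb0 v \<noteq> 0" using v0 by (auto simp: scale3_def)
    thus ?thesis using chart_swap[OF ch0] by blast
  qed
  then obtain a b la lb where ch: "chart l a b la lb" and \<alpha>0: "dot3 la v \<noteq> 0" by blast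
  have aF: "Fvec F a" and bF: "Fvec F b" using ch unfolding chart_def by auto
  define \<alpha> where "\<alpha> = dot3 la v"
  define \<theta> where "\<theta> = dot3 lb v / \<alpha>"
  define u where "u = lc 1 a \<theta> b"
  have vu: "v = scale3 \<alpha> u"
  proof -
    have "v = lc (dot3 la v) a (dot3 lb v) b" using ch on unfolding chart_def by blast
    thus ?thesis unfolding u_def \<theta>_def \<alpha>_def using lc_scale1[OF \<alpha>0] by simp
  qed
  have a0: "\<alpha> \<noteq> 0" using \<alpha>0 \<alpha>_def by simp
  have uv: "u = scale3 (1 / \<alpha>) v" using vu a0 by (simp add: scale3_scale3 scale3_1)
  have pvu: "proportional v u" unfolding proportional_def using uv a0 by (intro exI[of _ "1 / \<alpha>"]) simp
  obtain e0 where e0: "0 < e0" "proportional v ((frobv q ^^ e0) v)" using cr unfolding closed_rep_def by blast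
  obtain c0 where c0: "c0 \<noteq> 0" "frQ e0 v = scale3 c0 v" using e0(2) unfolding proportional_def frobv_iter by blast
  have fu: "frQ i u = lc 1 a (\<theta> ^ (q ^ i)) b" for i unfolding u_def using frQ_lc[OF aF bF] by simp
  have "frQ e0 u = scale3 ((1 / \<alpha>) ^ (q ^ e0) * c0 * \<alpha>) u"
    unfolding uv frQ_scale c0(2) scale3_scale3 using a0 by (simp add: mult.assoc)
  hence "lc 1 a (\<theta> ^ (q ^ e0)) b = scale3 ((1 / \<alpha>) ^ (q ^ e0) * c0 * \<alpha>) (lc 1 a \<theta> b)"
    using fu unfolding u_def by simp
  hence th0: "\<theta> ^ (q ^ e0) = \<theta>" using chart_coord[OF ch] by blast
  define e where "e = (LEAST e. 0 < e \<and> \<theta> ^ (q ^ e) = \<theta>)"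
  have he: "0 < e \<and> \<theta> ^ (q ^ e) = \<theta>" unfolding e_def using LeastI[of "\<lambda>e. 0 < e \<and> \<theta> ^ (q ^ e) = \<theta>" e0] e0 th0 by blast
  have mn: "\<forall>j. 0 < j \<and> j < e \<longrightarrow> \<theta> ^ (q ^ j) \<noteq> \<theta>" unfolding e_def using not_less_Least by blast
  have inj: "inj_on (\<lambda>i. \<theta> ^ (q ^ i)) {..<e}" using theta_distinct he mn by blast
  have cu: "cpt q u = (\<lambda>i. ppt (lc 1 a (\<theta> ^ (q ^ i)) b)) ` {..<e}"
  proof -
    have "cpt q u = {ppt (lc 1 a (\<theta> ^ (q ^ i)) b) |i. True}" unfolding cpt_def frobv_iter fu by simp
    also have "\<dots> = (\<lambda>i. ppt (lc 1 a (\<theta> ^ (q ^ i)) b)) ` {..<e}"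
    proof (intro equalityI subsetI)
      fix x assume "x \<in> {ppt (lc 1 a (\<theta> ^ (q ^ i)) b) |i. True}"
      then obtain i where x: "x = ppt (lc 1 a (\<theta> ^ (q ^ i)) b)" by blast
      have "\<theta> ^ (q ^ i) = \<theta> ^ (q ^ (i mod e))" using theta_mod he by blast
      hence eqx: "x = (\<lambda>i. ppt (lc 1 a (\<theta> ^ (q ^ i)) b)) (i mod e)" using x by simp
      have "i mod e \<in> {..<e}" using he by simp
      with eqx show "x \<in> (\<lambda>i. ppt (lc 1 a (\<theta> ^ (q ^ i)) b)) ` {..<e}" by (rule image_eqI)
    qed auto
    finally show ?thesis .
  qed
  have inj2: "inj_on (\<lambda>i. ppt (lc 1 a (\<theta> ^ (q ^ i)) b)) {..<e}"
  proof (rule inj_onI)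
    fix i j assume i: "i \<in> {..<e}" and j: "j \<in> {..<e}"
      and eq: "ppt (lc 1 a (\<theta> ^ (q ^ i)) b) = ppt (lc 1 a (\<theta> ^ (q ^ j)) b)"
    obtain c where "c \<noteq> 0" "lc 1 a (\<theta> ^ (q ^ i)) b = scale3 c (lc 1 a (\<theta> ^ (q ^ j)) b)"
      using ppt_eq_prop[OF eq] unfolding proportional_def by blast
    hence "\<theta> ^ (q ^ i) = \<theta> ^ (q ^ j)" using chart_coord[OF ch] by blast
    thus "i = j" using inj i j unfolding inj_on_def by blast
  qed
  have "cdeg q v = e" unfolding cdeg_def cpt_prop[OF pvu] cu using card_image[OF inj2] by simp
  thus ?thesis using ch pvu he mn unfolding u_def by blast
qed

lemma W_exists:
  assumes ch: "chart l a b la lb" and e_pos: "0 < e" and per: "\<theta> ^ (q ^ e) = \<theta>"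
    and mn: "\<forall>j. 0 < j \<and> j < e \<longrightarrow> \<theta> ^ (q ^ j) \<noteq> \<theta>"
  shows "\<exists>W. W \<in> hom_polys F (2 * e) \<and> kills (2 * e) W {(lc 1 a \<theta> b, b)} \<and>
     (\<forall>x. dot3 l x = 0 \<longrightarrow> x \<noteq> (0,0,0) \<longrightarrow> (\<forall>i. \<not> proportional (frQ i (lc 1 a \<theta> b)) x) \<longrightarrow> ev (2 * e) W x \<noteq> 0)"
proof -
  obtain R0 where R0: "R0 \<in> PF (2 * e)" "R0 \<noteq> 0" "psi \<theta> R0 = (0, 0)" "degree R0 = 2 * e"
    "\<forall>\<phi>. poly R0 \<phi> = 0 \<longrightarrow> (\<exists>i<e. \<phi> = \<theta> ^ (q ^ i))"
    using kernel_exists[OF e_pos per mn] by blast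
  have aF: "Fvec F a" "Fvec F b" "Fvec F la" "Fvec F lb" using ch unfolding chart_def by auto
  have cR: "\<forall>k. coeff R0 k \<in> F" using R0(1) unfolding PF_def by blast
  define W where "W = GR (2 * e) la lb R0"
  have hW: "W \<in> hom_polys F (2 * e)" unfolding W_def by (rule hp_GR[OF aF(3,4) cR])
  have kW: "kills (2 * e) W {(lc 1 a \<theta> b, b)}"
    unfolding kills_iff W_def using GR_at_u[OF ch, of R0 "2 * e" \<theta>] R0(3,4) unfolding psi_def by simp
  have nz: "ev (2 * e) W x \<noteq> 0" if x: "dot3 l x = 0" "x \<noteq> (0,0,0)" "\<forall>i. \<not> proportional (frQ i (lc 1 a \<theta> b)) x" for x
  proof -
    let ?\<alpha> = "dot3 la x" and ?\<beta> = "dot3 lb x"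
    have xs: "x = lc ?\<alpha> a ?\<beta> b" using ch x(1) unfolding chart_def by blast
    show ?thesis
    proof (cases "?\<alpha> = 0")
      case True
      have "?\<beta> \<noteq> 0"
      proof
        assume "?\<beta> = 0" hence "x = lc 0 a 0 b" using xs True by simp
        thus False using x(2) by (simp add: lc_def)
      qed
      moreover have "coeff R0 (2 * e) \<noteq> 0" using R0(2,4) by (metis leading_coeff_0_iff)
      ultimately show ?thesis unfolding W_def using ev_GR_z[OF True] by simp
    next
      case False
      have "poly R0 (?\<beta> / ?\<alpha>) \<noteq> 0"
      proof
        assume "poly R0 (?\<beta> / ?\<alpha>) = 0"
        then obtain i where i: "?\<beta> / ?\<alpha> = \<theta> ^ (q ^ i)" using R0(5) by blast
        have "x = scale3 ?\<alpha> (lc 1 a (?\<beta> / ?\<alpha>) b)" using xs lc_scale1[OF False] by metis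
        also have "lc 1 a (?\<beta> / ?\<alpha>) b = frQ i (lc 1 a \<theta> b)" using i frQ_lc[OF aF(1,2)] by simp
        finally have "proportional (frQ i (lc 1 a \<theta> b)) x" using False unfolding proportional_def by blast
        thus False using x(3) by blast
      qed
      thus ?thesis unfolding W_def using ev_GR_nz[OF _ False, of R0 "2 * e"] R0(4) False by simp
    qed
  qed
  show ?thesis using hW kW nz by blast
qed

lemma H_for_P:
  assumes ch: "chart l a b la lb" and lF: "Fvec F l" and e_pos: "0 < e" and per: "\<theta> ^ (q ^ e) = \<theta>"
    and mn: "\<forall>j. 0 < j \<and> j < e \<longrightarrow> \<theta> ^ (q ^ j) \<noteq> \<theta>"
    and x0: "x \<noteq> (0,0,0)" and xc: "dot3 l x \<noteq> 0 \<or> (\<forall>i. \<not> proportional (frQ i (lc 1 a \<theta> b)) x)"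
  shows "\<exists>\<delta> H. H \<in> hom_polys F \<delta> \<and> kills \<delta> H {(lc 1 a \<theta> b, b)} \<and> ev \<delta> H x \<noteq> 0"
proof (cases "dot3 l x = 0")
  case False
  have "dot3 l (lc 1 a \<theta> b) = 0" "dot3 l b = 0" using ch unfolding chart_def by (auto simp: dot3_lc)
  hence "kills (Suc 0) (lin l) {(lc 1 a \<theta> b, b)}" unfolding kills_iff by (simp add: ev_lin dd_lin)
  moreover have "ev (Suc 0) (lin l) x \<noteq> 0" using False by (simp add: ev_lin)
  moreover have "lin l \<in> hom_polys F (Suc 0)" using hp_lin[OF lF] by simp
  ultimately show ?thesis by blast
next
  case True
  thus ?thesis using W_exists[OF ch e_pos per mn] x0 xc by blast
qed

lemma H_for_Q:
  assumes qd: "qdata Q b1 b2 m0 m1 m2" and x0: "x \<noteq> (0,0,0)" and np: "\<not> proportional Q x"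
  shows "\<exists>\<delta> H. H \<in> hom_polys F \<delta> \<and> kills \<delta> H {(Q, b1), (Q, b2)} \<and> ev \<delta> H x \<noteq> 0"
proof -
  have mF: "Fvec F m1" "Fvec F m2" using qd unfolding qdata_def by auto
  have "\<exists>m. Fvec F m \<and> dot3 m Q = 0 \<and> dot3 m x \<noteq> 0"
  proof (rule ccontr)
    assume "\<not> ?thesis"
    hence "\<not> (Fvec F m1 \<and> dot3 m1 Q = 0 \<and> dot3 m1 x \<noteq> 0)" "\<not> (Fvec F m2 \<and> dot3 m2 Q = 0 \<and> dot3 m2 x \<noteq> 0)"
      by blast+
    moreover have "dot3 m1 Q = 0" "dot3 m2 Q = 0" using qd unfolding qdata_def by blast+
    ultimately have z: "dot3 m1 x = 0" "dot3 m2 x = 0" using mF by blast+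
    have "x = lc (dot3 m0 x) Q 1 (lc (dot3 m1 x) b1 (dot3 m2 x) b2)" using qd unfolding qdata_def by blast
    hence xs: "x = scale3 (dot3 m0 x) Q" using z by (simp add: lc_def scale3_def)
    hence "dot3 m0 x \<noteq> 0" using x0 by (auto simp: scale3_def)
    hence "proportional Q x" using xs unfolding proportional_def by blast
    thus False using np by blast
  qed
  then obtain m where m: "Fvec F m" "dot3 m Q = 0" "dot3 m x \<noteq> 0" by blast
  define H where "H = mul (Suc 0) (Suc 0) (lin m) (lin m)"
  have hl: "lin m \<in> hom_polys F (Suc 0)" using hp_lin[OF m(1)] by simp
  have hH: "H \<in> hom_polys F (Suc 0 + Suc 0)" unfolding H_def using hp_mul[OF hl hl] .
  have "kills (Suc 0 + Suc 0) H {(Q, b1), (Q, b2)}"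
    unfolding kills_iff H_def ev_mul dd_mul using m(2) by (simp add: ev_lin dd_lin)
  moreover have "ev (Suc 0 + Suc 0) H x \<noteq> 0" unfolding H_def ev_mul using m(3) by (simp add: ev_lin)
  ultimately show ?thesis using hH by blast
qed

lemma H_prod:
  assumes "finite I" "\<forall>i\<in>I. \<exists>\<delta> H. H \<in> hom_polys F \<delta> \<and> kills \<delta> H (S i) \<and> ev \<delta> H x \<noteq> 0"
  shows "\<exists>\<delta> H. H \<in> hom_polys F \<delta> \<and> kills \<delta> H (\<Union>i\<in>I. S i) \<and> ev \<delta> H x \<noteq> 0"
  using assms
proof (induction I rule: finite_induct)
  case empty
  have "one \<in> hom_polys F 0" by (rule hp_one)
  moreover have "kills 0 one (\<Union>i\<in>{}. S i)" unfolding kills_def by simp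
  moreover have "ev 0 one x \<noteq> 0" by (simp add: ev_one)
  ultimately show ?case by blast
next
  case (insert j I)
  obtain \<delta>1 H1 where 1: "H1 \<in> hom_polys F \<delta>1" "kills \<delta>1 H1 (S j)" "ev \<delta>1 H1 x \<noteq> 0"
    using insert.prems by blast
  obtain \<delta>2 H2 where 2: "H2 \<in> hom_polys F \<delta>2" "kills \<delta>2 H2 (\<Union>i\<in>I. S i)" "ev \<delta>2 H2 x \<noteq> 0"
    using insert.IH insert.prems by blast
  have "mul \<delta>1 \<delta>2 H1 H2 \<in> hom_polys F (\<delta>1 + \<delta>2)" using hp_mul 1 2 by blast
  moreover have "kills (\<delta>1 + \<delta>2) (mul \<delta>1 \<delta>2 H1 H2) (\<Union>i\<in>insert j I. S i)"
    using kills_mul_left[OF 1(2)] kills_mul_right[OF 2(2)] by (simp add: kills_Un)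
  moreover have "ev (\<delta>1 + \<delta>2) (mul \<delta>1 \<delta>2 H1 H2) x \<noteq> 0" unfolding ev_mul using 1 2 by simp
  ultimately show ?case by blast
qed

lemma H_two:
  assumes "H1 \<in> hom_polys F \<delta>1" "kills \<delta>1 H1 S1" "ev \<delta>1 H1 x \<noteq> 0"
    "H2 \<in> hom_polys F \<delta>2" "kills \<delta>2 H2 S2" "ev \<delta>2 H2 x \<noteq> 0"
  shows "\<exists>\<delta> H. H \<in> hom_polys F \<delta> \<and> kills \<delta> H (S1 \<union> S2) \<and> ev \<delta> H x \<noteq> 0"
proof -
  have "mul \<delta>1 \<delta>2 H1 H2 \<in> hom_polys F (\<delta>1 + \<delta>2)" using hp_mul assms by blast
  moreover have "kills (\<delta>1 + \<delta>2) (mul \<delta>1 \<delta>2 H1 H2) (S1 \<union> S2)"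
    using kills_mul_left[OF assms(2)] kills_mul_right[OF assms(5)] by (simp add: kills_Un)
  moreover have "ev (\<delta>1 + \<delta>2) (mul \<delta>1 \<delta>2 H1 H2) x \<noteq> 0" unfolding ev_mul using assms by simp
  ultimately show ?thesis by blast
qed

end



lemma count_fibers:
  fixes V :: "(mono3 \<Rightarrow> 'k::field) set" and \<Phi> :: "(mono3 \<Rightarrow> 'k) \<Rightarrow> 'b"
  assumes fin: "finite V" and img: "\<Phi> ` V = T"
    and cl_add: "\<And>f g. f \<in> V \<Longrightarrow> g \<in> V \<Longrightarrow> (\<lambda>m. f m + g m) \<in> V"
    and cl_diff: "\<And>f g. f \<in> V \<Longrightarrow> g \<in> V \<Longrightarrow> (\<lambda>m. f m - g m) \<in> V"
    and hom: "\<And>f g. f \<in> V \<Longrightarrow> g \<in> V \<Longrightarrow> \<Phi> f = \<Phi> g \<longleftrightarrow> \<Phi> (\<lambda>m. f m - g m) = \<Phi> (\<lambda>m. 0)"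
  shows "card V = card T * card {f \<in> V. \<Phi> f = \<Phi> (\<lambda>m. 0)}"
proof -
  let ?K = "{f \<in> V. \<Phi> f = \<Phi> (\<lambda>m. 0)}"
  have finT: "finite T" using fin img by blast
  have V: "V = (\<Union>y\<in>T. {f \<in> V. \<Phi> f = y})" using img by blast
  have fib: "card {f \<in> V. \<Phi> f = y} = card ?K" if y: "y \<in> T" for y
  proof -
    obtain g where g: "g \<in> V" "\<Phi> g = y" using y img by blast
    have "bij_betw (\<lambda>h m. g m + h m) ?K {f \<in> V. \<Phi> f = y}"
    proof (rule bij_betw_imageI)
      show "inj_on (\<lambda>h m. g m + h m) ?K"
      proof (rule inj_onI)
        fix h1 h2 assume "(\<lambda>m. g m + h1 m) = (\<lambda>m. g m + h2 m)"
        hence "\<And>m. g m + h1 m = g m + h2 m" by metis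
        thus "h1 = h2" by auto
      qed
      show "(\<lambda>h m. g m + h m) ` ?K = {f \<in> V. \<Phi> f = y}"
      proof (intro equalityI subsetI)
        fix f assume "f \<in> (\<lambda>h m. g m + h m) ` ?K"
        then obtain h where h: "h \<in> V" "\<Phi> h = \<Phi> (\<lambda>m. 0)" "f = (\<lambda>m. g m + h m)" by blast
        have fV: "f \<in> V" using cl_add[OF g(1) h(1)] h(3) by simp
        have "(\<lambda>m. f m - g m) = h" using h(3) by auto
        hence "\<Phi> f = \<Phi> g" using hom[OF fV g(1)] h(2) by simp
        thus "f \<in> {f \<in> V. \<Phi> f = y}" using fV g(2) by simp
      next
        fix f assume f: "f \<in> {f \<in> V. \<Phi> f = y}"
        let ?h = "\<lambda>m. f m - g m"
        have hV: "?h \<in> V" using cl_diff f g by blast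
        have "\<Phi> ?h = \<Phi> (\<lambda>m. 0)" using hom[of f g] f g by simp
        hence hK: "?h \<in> ?K" using hV by simp
        have "f = (\<lambda>h m. g m + h m) ?h" by auto
        thus "f \<in> (\<lambda>h m. g m + h m) ` ?K" using hK by (rule image_eqI)
      qed
    qed
    thus ?thesis by (simp add: bij_betw_same_card)
  qed
  have "card V = (\<Sum>y\<in>T. card {f \<in> V. \<Phi> f = y})"
    by (subst V, rule card_UN_disjoint) (use finT fin in auto)
  also have "\<dots> = (\<Sum>y\<in>T. card ?K)" using fib by simp
  finally show ?thesis by simp
qed

context fq
begin

lemma hp_finite: "finite (hom_polys F d)"
proof -
  have "inj_on (\<lambda>f. restrict f (mons3 d)) (hom_polys F d)"
  proof (rule inj_onI)
    fix f g assume f: "f \<in> hom_polys F d" and g: "g \<in> hom_polys F d"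
      and eq: "restrict f (mons3 d) = restrict g (mons3 d)"
    show "f = g"
    proof
      fix m show "f m = g m"
      proof (cases "m \<in> mons3 d")
        case True thus ?thesis using arg_cong[OF eq, of "\<lambda>h. h m"] by simp
      next
        case False thus ?thesis using hp_out[OF f False] hp_out[OF g False] by simp
      qed
    qed
  qed
  moreover have "(\<lambda>f. restrict f (mons3 d)) ` hom_polys F d \<subseteq> PiE (mons3 d) (\<lambda>_. F)"
    using hp_F by auto
  moreover have "finite (PiE (mons3 d) (\<lambda>_. F))" using finite_mons3 finF by (intro finite_PiE) auto
  ultimately show ?thesis using finite_imageD finite_subset by metis
qed

lemma surjP:
  assumes ch: "chart l a b la lb" and e_pos: "0 < e" and per: "\<theta> ^ (q ^ e) = \<theta>"
    and mn: "\<forall>j. 0 < j \<and> j < e \<longrightarrow> \<theta> ^ (q ^ j) \<noteq> \<theta>"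
    and hH: "H \<in> hom_polys F \<delta>" and h0: "ev \<delta> H (lc 1 a \<theta> b) \<noteq> 0"
    and D: "2 * e - 1 \<le> D" and X: "X \<in> Eset e" and Y: "Y \<in> Eset e"
  shows "\<exists>f. f \<in> hom_polys F (\<delta> + D) \<and> (\<forall>S. kills \<delta> H S \<longrightarrow> kills (\<delta> + D) f S)
     \<and> ev (\<delta> + D) f (lc 1 a \<theta> b) = X \<and> dd (\<delta> + D) f (lc 1 a \<theta> b) b = Y"
proof -
  let ?u = "lc 1 a \<theta> b"
  have aF: "Fvec F a" "Fvec F b" "Fvec F la" "Fvec F lb" using ch unfolding chart_def by auto
  have fu: "frQ e ?u = ?u" using frQ_lc[OF aF(1,2)] per by simp
  have fb: "frQ e b = b" using Fvec_frQ[OF aF(2)] .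
  have hF: "\<forall>m. H m \<in> F" using hp_Fall[OF hH] .
  define h0 where "h0 = ev \<delta> H ?u"
  define h1 where "h1 = dd \<delta> H ?u b"
  have h0E: "h0 \<in> Eset e" unfolding Eset_def h0_def using ev_frQ[OF hF, of \<delta> ?u e] fu by simp
  have h1E: "h1 \<in> Eset e" unfolding Eset_def h1_def using dd_frQ[OF hF, of \<delta> ?u b e] fu fb by simp
  define r0 where "r0 = X / h0"
  define r1 where "r1 = (Y - h1 * r0) / h0"
  have r0E: "r0 \<in> Eset e" unfolding r0_def using Eset_closed(6)[OF X h0E] .
  have r1E: "r1 \<in> Eset e" unfolding r1_def
    using Eset_closed(6)[OF Eset_closed(4)[OF Y Eset_closed(5)[OF h1E r0E]] h0E] .
  have "(r0, r1) \<in> psi \<theta> ` PF (2 * e - 1)" using E_card_and_surj(2)[OF e_pos per mn] r0E r1E by blast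
  then obtain R where R1: "(r0, r1) = psi \<theta> R" and R0: "R \<in> PF (2 * e - 1)" by (rule imageE)
  have R: "R \<in> PF (2 * e - 1)" "psi \<theta> R = (r0, r1)" using R0 R1 by simp_all
  have cR: "\<forall>k. coeff R k \<in> F" and dR: "degree R \<le> D" using R(1) D unfolding PF_def by auto
  define g where "g = GR D la lb R"
  have hg: "g \<in> hom_polys F D" unfolding g_def by (rule hp_GR[OF aF(3,4) cR])
  have eg: "ev D g ?u = r0" "dd D g ?u b = r1"
    unfolding g_def GR_at_u[OF ch dR] using R(2) unfolding psi_def by auto
  define f where "f = mul \<delta> D H g"
  have "f \<in> hom_polys F (\<delta> + D)" unfolding f_def by (rule hp_mul[OF hH hg])
  moreover have "\<forall>S. kills \<delta> H S \<longrightarrow> kills (\<delta> + D) f S" unfolding f_def using kills_mul_left by blast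
  moreover have "ev (\<delta> + D) f ?u = X" unfolding f_def ev_mul eg h0_def[symmetric] r0_def
    using h0 h0_def by simp
  moreover have "dd (\<delta> + D) f ?u b = Y" unfolding f_def dd_mul eg h0_def[symmetric] h1_def[symmetric]
    using h0 h0_def unfolding r1_def r0_def by (simp add: field_simps)
  ultimately show ?thesis by blast
qed

lemma ev_mulS: "ev (Suc D) (mul D (Suc 0) f g) p = ev D f p * ev (Suc 0) g p"
  using ev_mul[of D "Suc 0" f g p] by simp
lemma dd_mulS: "dd (Suc D) (mul D (Suc 0) f g) p w = ev D f p * dd (Suc 0) g p w + dd D f p w * ev (Suc 0) g p"
  using dd_mul[of D "Suc 0" f g p w] by simp

lemma surjQ:
  assumes qd: "qdata Q b1 b2 m0 m1 m2"
    and hH: "H \<in> hom_polys F \<delta>" and h0: "ev \<delta> H Q \<noteq> 0"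
    and X: "X \<in> F" and Y1: "Y1 \<in> F" and Y2: "Y2 \<in> F"
  shows "\<exists>f. f \<in> hom_polys F (\<delta> + Suc D) \<and> (\<forall>S. kills \<delta> H S \<longrightarrow> kills (\<delta> + Suc D) f S)
     \<and> ev (\<delta> + Suc D) f Q = X \<and> dd (\<delta> + Suc D) f Q b1 = Y1 \<and> dd (\<delta> + Suc D) f Q b2 = Y2"
proof -
  have vF: "Fvec F Q" "Fvec F b1" "Fvec F b2" "Fvec F m0" "Fvec F m1" "Fvec F m2"
    using qd unfolding qdata_def by auto
  have dots: "dot3 m0 Q = 1" "dot3 m0 b1 = 0" "dot3 m0 b2 = 0" "dot3 m1 Q = 0" "dot3 m1 b1 = 1"
    "dot3 m1 b2 = 0" "dot3 m2 Q = 0" "dot3 m2 b1 = 0" "dot3 m2 b2 = 1"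
    using qd unfolding qdata_def by auto
  have hF: "\<forall>m. H m \<in> F" using hp_Fall[OF hH] .
  define h0 where "h0 = ev \<delta> H Q"
  define h1 where "h1 = dd \<delta> H Q b1"
  define h2 where "h2 = dd \<delta> H Q b2"
  have hs: "h0 \<in> F" "h1 \<in> F" "h2 \<in> F" unfolding h0_def h1_def h2_def
    using ev_F[OF hF vF(1)] dd_F[OF hF vF(1) vF(2)] dd_F[OF hF vF(1) vF(3)] by auto
  define x0 where "x0 = X / h0"
  define y1 where "y1 = (Y1 - h1 * x0) / h0"
  define y2 where "y2 = (Y2 - h2 * x0) / h0"
  have xs: "x0 \<in> F" "y1 \<in> F" "y2 \<in> F" unfolding x0_def y1_def y2_def
    using hs X Y1 Y2 by (auto intro!: Fdivide Fdiff Fmult)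
  define A where "A = lpow m0 (Suc D)"
  define B1 where "B1 = mul D (Suc 0) (lpow m0 D) (lin m1)"
  define B2 where "B2 = mul D (Suc 0) (lpow m0 D) (lin m2)"
  define g where "g = (\<lambda>m. smul x0 A m + (smul y1 B1 m + smul y2 B2 m))"
  have hl: "lin m1 \<in> hom_polys F (Suc 0)" "lin m2 \<in> hom_polys F (Suc 0)" using hp_lin vF by simp_all
  have hA: "A \<in> hom_polys F (Suc D)" unfolding A_def by (rule hp_lpow[OF vF(4)])
  have hB1: "B1 \<in> hom_polys F (Suc D)" unfolding B1_def using hp_mul[OF hp_lpow[OF vF(4)] hl(1)] by simp
  have hB2: "B2 \<in> hom_polys F (Suc D)" unfolding B2_def using hp_mul[OF hp_lpow[OF vF(4)] hl(2)] by simp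
  have hg: "g \<in> hom_polys F (Suc D)" unfolding g_def
    by (intro hp_add hp_smul xs hA hB1 hB2)
  have evg: "ev (Suc D) g Q = x0" unfolding g_def ev_add ev_smul A_def B1_def B2_def ev_mulS
    by (simp add: ev_lpow ev_lin dots del: lpow.simps)
  have ddg1: "dd (Suc D) g Q b1 = y1" unfolding g_def dd_add dd_smul A_def B1_def B2_def dd_mulS
    by (simp add: ev_lpow ev_lin dd_lpow dd_lin dots del: lpow.simps)
  have ddg2: "dd (Suc D) g Q b2 = y2" unfolding g_def dd_add dd_smul A_def B1_def B2_def dd_mulS
    by (simp add: ev_lpow ev_lin dd_lpow dd_lin dots del: lpow.simps)
  define f where "f = mul \<delta> (Suc D) H g"
  have "f \<in> hom_polys F (\<delta> + Suc D)" unfolding f_def by (rule hp_mul[OF hH hg])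
  moreover have "\<forall>S. kills \<delta> H S \<longrightarrow> kills (\<delta> + Suc D) f S" unfolding f_def using kills_mul_left by blast
  moreover have "ev (\<delta> + Suc D) f Q = X" unfolding f_def ev_mul evg h0_def[symmetric] x0_def
    using h0 h0_def by simp
  moreover have "dd (\<delta> + Suc D) f Q b1 = Y1" unfolding f_def dd_mul evg ddg1 h0_def[symmetric] h1_def[symmetric]
    using h0 h0_def unfolding y1_def x0_def by (simp add: field_simps)
  moreover have "dd (\<delta> + Suc D) f Q b2 = Y2" unfolding f_def dd_mul evg ddg2 h0_def[symmetric] h2_def[symmetric]
    using h0 h0_def unfolding y2_def x0_def by (simp add: field_simps)
  ultimately show ?thesis by blast
qed

end



lemma restrict_eq_iff: "(restrict f A = restrict g A) \<longleftrightarrow> (\<forall>x\<in>A. f x = g x)"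
  by (auto simp: fun_eq_iff restrict_def)

lemma sum_single: "finite I \<Longrightarrow> i \<in> I \<Longrightarrow> (\<forall>k\<in>I - {i}. g k = 0) \<Longrightarrow> sum g I = (g i :: 'a::comm_monoid_add)"
  by (simp add: sum.remove)

lemma choice6:
  assumes h: "\<forall>i<n. \<exists>a b c d e f. R i a b c d e f"
  shows "\<exists>A B C D E G. \<forall>i<n. R i (A i) (B i) (C i) (D i) (E i) (G i)"
proof -
  have "\<forall>i\<in>{..<n}. \<exists>t. R i (fst t) (fst (snd t)) (fst (snd (snd t))) (fst (snd (snd (snd t))))
      (fst (snd (snd (snd (snd t))))) (snd (snd (snd (snd (snd t)))))"
  proof
    fix i assume "i \<in> {..<n}"
    then obtain a b c d e f where "R i a b c d e f" using h by blast
    thus "\<exists>t. R i (fst t) (fst (snd t)) (fst (snd (snd t))) (fst (snd (snd (snd t))))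
      (fst (snd (snd (snd (snd t))))) (snd (snd (snd (snd (snd t)))))"
      by (intro exI[of _ "(a, b, c, d, e, f)"]) simp
  qed
  from bchoice[OF this] obtain T where T: "\<forall>i\<in>{..<n}. R i (fst (T i)) (fst (snd (T i))) (fst (snd (snd (T i))))
      (fst (snd (snd (snd (T i))))) (fst (snd (snd (snd (snd (T i)))))) (snd (snd (snd (snd (snd (T i))))))" by blast
  show ?thesis
    apply (rule exI[of _ "\<lambda>i. fst (T i)"])
    apply (rule exI[of _ "\<lambda>i. fst (snd (T i))"])
    apply (rule exI[of _ "\<lambda>i. fst (snd (snd (T i)))"])
    apply (rule exI[of _ "\<lambda>i. fst (snd (snd (snd (T i))))"])
    apply (rule exI[of _ "\<lambda>i. fst (snd (snd (snd (snd (T i)))))"])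
    apply (rule exI[of _ "\<lambda>i. snd (snd (snd (snd (snd (T i)))))"])
    using T by simp
qed

lemma choice5:
  assumes h: "\<forall>i<n. \<exists>a b c d e. R i a b c d e"
  shows "\<exists>A B C D E. \<forall>i<n. R i (A i) (B i) (C i) (D i) (E i)"
proof -
  have "\<forall>i\<in>{..<n}. \<exists>t. R i (fst t) (fst (snd t)) (fst (snd (snd t))) (fst (snd (snd (snd t))))
      (snd (snd (snd (snd t))))"
  proof
    fix i assume "i \<in> {..<n}"
    then obtain a b c d e where "R i a b c d e" using h by blast
    thus "\<exists>t. R i (fst t) (fst (snd t)) (fst (snd (snd t))) (fst (snd (snd (snd t))))
      (snd (snd (snd (snd t))))"
      by (intro exI[of _ "(a, b, c, d, e)"]) simp
  qed
  from bchoice[OF this] obtain T where T: "\<forall>i\<in>{..<n}. R i (fst (T i)) (fst (snd (T i))) (fst (snd (snd (T i))))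
      (fst (snd (snd (snd (T i))))) (snd (snd (snd (snd (T i)))))" by blast
  show ?thesis
    apply (rule exI[of _ "\<lambda>i. fst (T i)"])
    apply (rule exI[of _ "\<lambda>i. fst (snd (T i))"])
    apply (rule exI[of _ "\<lambda>i. fst (snd (snd (T i)))"])
    apply (rule exI[of _ "\<lambda>i. fst (snd (snd (snd (T i))))"])
    apply (rule exI[of _ "\<lambda>i. snd (snd (snd (snd (T i))))"])
    using T by simp
qed

lemma choice2:
  assumes h: "\<forall>i<n. \<exists>a b. R i a b"
  shows "\<exists>A B. \<forall>i<n. R i (A i) (B i)"
proof -
  have "\<forall>i\<in>{..<n}. \<exists>t. R i (fst t) (snd t)"
  proof
    fix i assume "i \<in> {..<n}"
    then obtain a b where "R i a b" using h by blast
    thus "\<exists>t. R i (fst t) (snd t)" by (intro exI[of _ "(a, b)"]) simp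
  qed
  from bchoice[OF this] obtain T where T: "\<forall>i\<in>{..<n}. R i (fst (T i)) (snd (T i))" by blast
  show ?thesis
    apply (rule exI[of _ "\<lambda>i. fst (T i)"])
    apply (rule exI[of _ "\<lambda>i. snd (T i)"])
    using T by simp
qed

lemma choice1:
  assumes h: "\<forall>i<n. \<exists>a. R i a"
  shows "\<exists>A. \<forall>i<n. R i (A i)"
proof -
  have "\<forall>i\<in>{..<n}. \<exists>a. R i a" using h by blast
  from bchoice[OF this] obtain T where T: "\<forall>i\<in>{..<n}. R i (T i)" by blast
  show ?thesis using T by (intro exI[of _ T]) simp
qed

theorem lemma4p4:
  fixes F :: "'k::field set" and q n s :: nat and P L Q :: "nat \<Rightarrow> 'k vec3"
  assumes "alg_closed TYPE('k)"
    and "is_subfield F" and "finite F" and "card F = q"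
    and "\<forall>i<n. closed_rep q (P i)"
    and "\<forall>i<n. \<forall>j<n. i \<noteq> j \<longrightarrow> cpt q (P i) \<noteq> cpt q (P j)"
    and "\<forall>i<n. Fvec F (L i) \<and> L i \<noteq> (0,0,0)"
    and "\<forall>i<n. dot3 (L i) (P i) = 0"
    and "\<forall>j<s. Fvec F (Q j) \<and> Q j \<noteq> (0,0,0)"
    and "\<forall>j<s. \<forall>j'<s. j \<noteq> j' \<longrightarrow> \<not> proportional (Q j) (Q j')"
    and "\<forall>i<n. \<forall>j<s. dot3 (L i) (Q j) \<noteq> 0"
  defines "A \<equiv> (\<lambda>d f. (\<forall>i<n. tangent_at q d f (L i) (P i)) \<and> (\<forall>j<s. singular_at d f (Q j)))"
  shows "(\<exists>d0. \<forall>d\<ge>d0. mu_d F d A = 1 / real q ^ (3 * s + (\<Sum>i<n. 2 * cdeg q (P i))))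
     \<and> (\<lambda>d. mu_d F d A) \<longlonglongrightarrow> 1 / real q ^ (3 * s + (\<Sum>i<n. 2 * cdeg q (P i)))"
proof -
  interpret fq F q using assms(2,3,4) by unfold_locales
  note cr = assms(5) and distP = assms(6) and LF = assms(7) and on = assms(8)
    and QF = assms(9) and distQ = assms(10) and off = assms(11)
  have ex6: "\<forall>i<n. \<exists>a b la lb \<theta> e. chart (L i) a b la lb \<and> proportional (P i) (lc 1 a \<theta> b) \<and> 0 < e
     \<and> \<theta> ^ (q ^ e) = \<theta> \<and> (\<forall>j. 0 < j \<and> j < e \<longrightarrow> \<theta> ^ (q ^ j) \<noteq> \<theta>) \<and> cdeg q (P i) = e"
    using blockP_exists cr LF on by blast
  obtain a b la lb \<theta> e where Pd: "\<forall>i<n. chart (L i) (a i) (b i) (la i) (lb i)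
     \<and> proportional (P i) (lc 1 (a i) (\<theta> i) (b i)) \<and> 0 < e i
     \<and> \<theta> i ^ (q ^ e i) = \<theta> i \<and> (\<forall>j. 0 < j \<and> j < e i \<longrightarrow> \<theta> i ^ (q ^ j) \<noteq> \<theta> i) \<and> cdeg q (P i) = e i"
    using choice6[OF ex6] by blast
  have ex5: "\<forall>j<s. \<exists>b1 b2 m0 m1 m2. qdata (Q j) b1 b2 m0 m1 m2" using qdata_exists QF by blast
  obtain b1 b2 m0 m1 m2 where Qd: "\<forall>j<s. qdata (Q j) (b1 j) (b2 j) (m0 j) (m1 j) (m2 j)"
    using choice5[OF ex5] by blast
  define u where "u i = lc 1 (a i) (\<theta> i) (b i)" for i
  have ch: "chart (L i) (a i) (b i) (la i) (lb i)" if "i < n" for i using Pd that by blast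
  have pr: "proportional (P i) (u i)" if "i < n" for i using Pd that unfolding u_def by blast
  have epos: "0 < e i" if "i < n" for i using Pd that by blast
  have per: "\<theta> i ^ (q ^ e i) = \<theta> i" if "i < n" for i using Pd that by blast
  have mn: "\<forall>j. 0 < j \<and> j < e i \<longrightarrow> \<theta> i ^ (q ^ j) \<noteq> \<theta> i" if "i < n" for i using Pd that by blast
  have cd: "cdeg q (P i) = e i" if "i < n" for i using Pd that by blast
  have lF: "Fvec F (L i)" if "i < n" for i using LF that by blast
  have abF: "Fvec F (a i)" "Fvec F (b i)" if "i < n" for i using ch[OF that] unfolding chart_def by auto
  have u0: "u i \<noteq> (0,0,0)" if "i < n" for i
  proof
    assume "u i = (0,0,0)" hence "dot3 (la i) (u i) = 0" by (simp add: dot3_def)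
    thus False using ch[OF that] unfolding chart_def u_def by (simp add: dot3_lc)
  qed
  have uon: "dot3 (L i) (u i) = 0" if "i < n" for i
    using ch[OF that] unfolding chart_def u_def by (simp add: dot3_lc)
  have fu: "frQ (e i) (u i) = u i" if "i < n" for i
    unfolding u_def using frQ_lc[OF abF[OF that]] per[OF that] by simp
  have qd: "qdata (Q j) (b1 j) (b2 j) (m0 j) (m1 j) (m2 j)" if "j < s" for j using Qd that by blast
  have Q0: "Q j \<noteq> (0,0,0)" if "j < s" for j using QF that by blast
  have QvF: "Fvec F (Q j)" "Fvec F (b1 j)" "Fvec F (b2 j)" if "j < s" for j
    using qd[OF that] unfolding qdata_def by auto
  define SP where "SP i = {(u i, b i)}" for i
  define SQ where "SQ j = {(Q j, b1 j), (Q j, b2 j)}" for j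

  have HPex: "\<forall>k<n. \<exists>\<delta> H. H \<in> hom_polys F \<delta> \<and> kills \<delta> H ((\<Union>i\<in>{..<n}-{k}. SP i) \<union> (\<Union>j\<in>{..<s}. SQ j))
      \<and> ev \<delta> H (u k) \<noteq> 0"
  proof (intro allI impI)
    fix k assume k: "k < n"
    have "\<exists>\<delta> H. H \<in> hom_polys F \<delta> \<and> kills \<delta> H (\<Union>i\<in>{..<n}-{k}. SP i) \<and> ev \<delta> H (u k) \<noteq> 0"
    proof (rule H_prod)
      show "finite ({..<n}-{k})" by simp
      show "\<forall>i\<in>{..<n}-{k}. \<exists>\<delta> H. H \<in> hom_polys F \<delta> \<and> kills \<delta> H (SP i) \<and> ev \<delta> H (u k) \<noteq> 0"
      proof
        fix i assume i: "i \<in> {..<n}-{k}"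
        hence il: "i < n" and ik: "i \<noteq> k" by auto
        have xc: "\<forall>j. \<not> proportional (frQ j (u i)) (u k)"
        proof (intro allI notI)
          fix j assume pj: "proportional (frQ j (u i)) (u k)"
          have "cpt q (P k) = cpt q (u k)" using cpt_prop[OF pr[OF k]] .
          also have "\<dots> = cpt q (frQ j (u i))" using cpt_prop[OF prop_sym[OF pj]] .
          also have "\<dots> = cpt q (u i)" using cpt_shift[OF fu[OF il] epos[OF il]] .
          also have "\<dots> = cpt q (P i)" using cpt_prop[OF pr[OF il]] by simp
          finally show False using distP il k ik by metis
        qed
        show "\<exists>\<delta> H. H \<in> hom_polys F \<delta> \<and> kills \<delta> H (SP i) \<and> ev \<delta> H (u k) \<noteq> 0"
          using H_for_P[OF ch[OF il] lF[OF il] epos[OF il] per[OF il] mn[OF il] u0[OF k]] xc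
          unfolding SP_def u_def by blast
      qed
    qed
    then obtain \<delta>1 H1 where 1: "H1 \<in> hom_polys F \<delta>1" "kills \<delta>1 H1 (\<Union>i\<in>{..<n}-{k}. SP i)" "ev \<delta>1 H1 (u k) \<noteq> 0"
      by blast
    have "\<exists>\<delta> H. H \<in> hom_polys F \<delta> \<and> kills \<delta> H (\<Union>j\<in>{..<s}. SQ j) \<and> ev \<delta> H (u k) \<noteq> 0"
    proof (rule H_prod)
      show "finite {..<s}" by simp
      show "\<forall>j\<in>{..<s}. \<exists>\<delta> H. H \<in> hom_polys F \<delta> \<and> kills \<delta> H (SQ j) \<and> ev \<delta> H (u k) \<noteq> 0"
      proof
        fix j assume "j \<in> {..<s}" hence j: "j < s" by simp
        have np: "\<not> proportional (Q j) (u k)"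
        proof
          assume "proportional (Q j) (u k)"
          then obtain c where c: "c \<noteq> 0" "u k = scale3 c (Q j)" unfolding proportional_def by blast
          have "dot3 (L k) (u k) = c * dot3 (L k) (Q j)" using c(2) by (simp add: dot3_scale)
          thus False using uon[OF k] c(1) off k j by simp
        qed
        show "\<exists>\<delta> H. H \<in> hom_polys F \<delta> \<and> kills \<delta> H (SQ j) \<and> ev \<delta> H (u k) \<noteq> 0"
          using H_for_Q[OF qd[OF j] u0[OF k] np] unfolding SQ_def by blast
      qed
    qed
    then obtain \<delta>2 H2 where 2: "H2 \<in> hom_polys F \<delta>2" "kills \<delta>2 H2 (\<Union>j\<in>{..<s}. SQ j)" "ev \<delta>2 H2 (u k) \<noteq> 0"
      by blast
    show "\<exists>\<delta> H. H \<in> hom_polys F \<delta> \<and> kills \<delta> H ((\<Union>i\<in>{..<n}-{k}. SP i) \<union> (\<Union>j\<in>{..<s}. SQ j))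
      \<and> ev \<delta> H (u k) \<noteq> 0" using H_two[OF 1 2] .
  qed

  have HQex: "\<forall>k<s. \<exists>\<delta> H. H \<in> hom_polys F \<delta> \<and> kills \<delta> H ((\<Union>i\<in>{..<n}. SP i) \<union> (\<Union>j\<in>{..<s}-{k}. SQ j))
      \<and> ev \<delta> H (Q k) \<noteq> 0"
  proof (intro allI impI)
    fix k assume k: "k < s"
    have "\<exists>\<delta> H. H \<in> hom_polys F \<delta> \<and> kills \<delta> H (\<Union>i\<in>{..<n}. SP i) \<and> ev \<delta> H (Q k) \<noteq> 0"
    proof (rule H_prod)
      show "finite {..<n}" by simp
      show "\<forall>i\<in>{..<n}. \<exists>\<delta> H. H \<in> hom_polys F \<delta> \<and> kills \<delta> H (SP i) \<and> ev \<delta> H (Q k) \<noteq> 0"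
      proof
        fix i assume "i \<in> {..<n}" hence il: "i < n" by simp
        have xc: "dot3 (L i) (Q k) \<noteq> 0" using off il k by blast
        show "\<exists>\<delta> H. H \<in> hom_polys F \<delta> \<and> kills \<delta> H (SP i) \<and> ev \<delta> H (Q k) \<noteq> 0"
          using H_for_P[OF ch[OF il] lF[OF il] epos[OF il] per[OF il] mn[OF il] Q0[OF k]] xc
          unfolding SP_def u_def by blast
      qed
    qed
    then obtain \<delta>1 H1 where 1: "H1 \<in> hom_polys F \<delta>1" "kills \<delta>1 H1 (\<Union>i\<in>{..<n}. SP i)" "ev \<delta>1 H1 (Q k) \<noteq> 0"
      by blast
    have "\<exists>\<delta> H. H \<in> hom_polys F \<delta> \<and> kills \<delta> H (\<Union>j\<in>{..<s}-{k}. SQ j) \<and> ev \<delta> H (Q k) \<noteq> 0"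
    proof (rule H_prod)
      show "finite ({..<s}-{k})" by simp
      show "\<forall>j\<in>{..<s}-{k}. \<exists>\<delta> H. H \<in> hom_polys F \<delta> \<and> kills \<delta> H (SQ j) \<and> ev \<delta> H (Q k) \<noteq> 0"
      proof
        fix j assume "j \<in> {..<s}-{k}" hence j: "j < s" "j \<noteq> k" by auto
        have np: "\<not> proportional (Q j) (Q k)" using distQ j k by blast
        show "\<exists>\<delta> H. H \<in> hom_polys F \<delta> \<and> kills \<delta> H (SQ j) \<and> ev \<delta> H (Q k) \<noteq> 0"
          using H_for_Q[OF qd[OF j(1)] Q0[OF k] np] unfolding SQ_def by blast
      qed
    qed
    then obtain \<delta>2 H2 where 2: "H2 \<in> hom_polys F \<delta>2" "kills \<delta>2 H2 (\<Union>j\<in>{..<s}-{k}. SQ j)" "ev \<delta>2 H2 (Q k) \<noteq> 0"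
      by blast
    show "\<exists>\<delta> H. H \<in> hom_polys F \<delta> \<and> kills \<delta> H ((\<Union>i\<in>{..<n}. SP i) \<union> (\<Union>j\<in>{..<s}-{k}. SQ j))
      \<and> ev \<delta> H (Q k) \<noteq> 0" using H_two[OF 1 2] .
  qed
  obtain \<delta>P HP where HP: "\<forall>k<n. HP k \<in> hom_polys F (\<delta>P k) \<and>
      kills (\<delta>P k) (HP k) ((\<Union>i\<in>{..<n}-{k}. SP i) \<union> (\<Union>j\<in>{..<s}. SQ j)) \<and> ev (\<delta>P k) (HP k) (u k) \<noteq> 0"
    using choice2[OF HPex] by blast
  obtain \<delta>Q HQ where HQ: "\<forall>k<s. HQ k \<in> hom_polys F (\<delta>Q k) \<and>
      kills (\<delta>Q k) (HQ k) ((\<Union>i\<in>{..<n}. SP i) \<union> (\<Union>j\<in>{..<s}-{k}. SQ j)) \<and> ev (\<delta>Q k) (HQ k) (Q k) \<noteq> 0"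
    using choice2[OF HQex] by blast

  define c where "c = 3 * s + (\<Sum>i<n. 2 * cdeg q (P i))"
  define d0 where "d0 = (\<Sum>k<n. \<delta>P k + 2 * e k) + (\<Sum>k<s. \<delta>Q k + 1)"

  have main: "mu_d F d A = 1 / real q ^ c" if dd0: "d \<ge> d0" for d
  proof -
    have dP: "\<delta>P k + 2 * e k \<le> d" if "k < n" for k
    proof -
      have "\<delta>P k + 2 * e k \<le> (\<Sum>k<n. \<delta>P k + 2 * e k)" using that by (intro member_le_sum) auto
      thus ?thesis using dd0 unfolding d0_def by linarith
    qed
    have dQ: "\<delta>Q k + 1 \<le> d" if "k < s" for k
    proof -
      have "\<delta>Q k + 1 \<le> (\<Sum>k<s. \<delta>Q k + 1)" using that by (intro member_le_sum) auto
      thus ?thesis using dd0 unfolding d0_def by linarith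
    qed
    define V where "V = hom_polys F d"
    define \<Phi> where "\<Phi> f = (restrict (\<lambda>i. (ev d f (u i), dd d f (u i) (b i))) {..<n},
       restrict (\<lambda>j. (ev d f (Q j), dd d f (Q j) (b1 j), dd d f (Q j) (b2 j))) {..<s})" for f
    define T where "T = (PiE {..<n} (\<lambda>i. Eset (e i) \<times> Eset (e i))) \<times> (PiE {..<s} (\<lambda>j. F \<times> F \<times> F))"
    have \<Phi>0: "\<Phi> (\<lambda>m. 0) = (restrict (\<lambda>i. (0, 0)) {..<n}, restrict (\<lambda>j. (0, 0, 0)) {..<s})"
      unfolding \<Phi>_def by (simp add: ev_zero dd_zero)
    have hom: "\<Phi> f = \<Phi> g \<longleftrightarrow> \<Phi> (\<lambda>m. f m - g m) = \<Phi> (\<lambda>m. 0)" for f g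
      unfolding \<Phi>0 unfolding \<Phi>_def prod.inject restrict_eq_iff by (simp add: ev_diff dd_diff)
    have ker: "A d f \<longleftrightarrow> \<Phi> f = \<Phi> (\<lambda>m. 0)" if fV: "f \<in> V" for f
    proof -
      have fF: "\<forall>m. f m \<in> F" using hp_Fall fV unfolding V_def by blast
      have "A d f \<longleftrightarrow> (\<forall>i<n. ev d f (u i) = 0 \<and> dd d f (u i) (b i) = 0)
          \<and> (\<forall>j<s. ev d f (Q j) = 0 \<and> dd d f (Q j) (b1 j) = 0 \<and> dd d f (Q j) (b2 j) = 0)"
        unfolding A_def using tan_iff[OF ch pr[unfolded u_def] fF lF] sing_iff[OF qd] unfolding u_def
        by (metis lessThan_iff)
      also have "\<dots> \<longleftrightarrow> \<Phi> f = \<Phi> (\<lambda>m. 0)" unfolding \<Phi>0 unfolding \<Phi>_def prod.inject restrict_eq_iff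
        by (auto simp: Ball_def)
      finally show ?thesis .
    qed
    have sub: "\<Phi> ` V \<subseteq> T"
    proof
      fix y assume "y \<in> \<Phi> ` V"
      then obtain f where fV: "f \<in> V" and y: "y = \<Phi> f" by blast
      have fF: "\<forall>m. f m \<in> F" using hp_Fall fV unfolding V_def by blast
      have "ev d f (u i) \<in> Eset (e i) \<and> dd d f (u i) (b i) \<in> Eset (e i)" if "i < n" for i
        unfolding Eset_def using ev_frQ[OF fF, of d "u i" "e i"] dd_frQ[OF fF, of d "u i" "b i" "e i"]
          fu[OF that] Fvec_frQ[OF abF(2)[OF that]] by simp
      moreover have "ev d f (Q j) \<in> F \<and> dd d f (Q j) (b1 j) \<in> F \<and> dd d f (Q j) (b2 j) \<in> F" if "j < s" for j
        using ev_F[OF fF QvF(1)[OF that]] dd_F[OF fF QvF(1)[OF that] QvF(2)[OF that]]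
          dd_F[OF fF QvF(1)[OF that] QvF(3)[OF that]] by blast
      ultimately show "y \<in> T" unfolding y \<Phi>_def T_def by auto
    qed
    have sup: "T \<subseteq> \<Phi> ` V"
    proof
      fix y assume yT: "y \<in> T"
      obtain yP yQ where y: "y = (yP, yQ)" by (cases y)
      have yP: "yP \<in> PiE {..<n} (\<lambda>i. Eset (e i) \<times> Eset (e i))" and yQ: "yQ \<in> PiE {..<s} (\<lambda>j. F \<times> F \<times> F)"
        using yT unfolding y T_def by auto
      have exP: "\<forall>k<n. \<exists>f. f \<in> hom_polys F d \<and> kills d f ((\<Union>i\<in>{..<n}-{k}. SP i) \<union> (\<Union>j\<in>{..<s}. SQ j))
          \<and> ev d f (u k) = fst (yP k) \<and> dd d f (u k) (b k) = snd (yP k)"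
      proof (intro allI impI)
        fix k assume k: "k < n"
        have D: "2 * e k - 1 \<le> d - \<delta>P k" using dP[OF k] by linarith
        have "yP k \<in> Eset (e k) \<times> Eset (e k)" using yP k by (simp add: PiE_iff)
        hence XY: "fst (yP k) \<in> Eset (e k)" "snd (yP k) \<in> Eset (e k)" by (simp_all add: mem_Times_iff)
        obtain f where f: "f \<in> hom_polys F (\<delta>P k + (d - \<delta>P k))"
          "\<forall>S. kills (\<delta>P k) (HP k) S \<longrightarrow> kills (\<delta>P k + (d - \<delta>P k)) f S"
          "ev (\<delta>P k + (d - \<delta>P k)) f (u k) = fst (yP k)" "dd (\<delta>P k + (d - \<delta>P k)) f (u k) (b k) = snd (yP k)"
          using surjP[OF ch[OF k] epos[OF k] per[OF k] mn[OF k], of "HP k" "\<delta>P k" "d - \<delta>P k"] HP k D XY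
          unfolding u_def by blast
        have dd': "\<delta>P k + (d - \<delta>P k) = d" using dP[OF k] by simp
        show "\<exists>f. f \<in> hom_polys F d \<and> kills d f ((\<Union>i\<in>{..<n}-{k}. SP i) \<union> (\<Union>j\<in>{..<s}. SQ j))
          \<and> ev d f (u k) = fst (yP k) \<and> dd d f (u k) (b k) = snd (yP k)"
          using f HP k unfolding dd' by blast
      qed
      obtain fP where fP: "\<forall>k<n. fP k \<in> hom_polys F d \<and> kills d (fP k) ((\<Union>i\<in>{..<n}-{k}. SP i) \<union> (\<Union>j\<in>{..<s}. SQ j))
          \<and> ev d (fP k) (u k) = fst (yP k) \<and> dd d (fP k) (u k) (b k) = snd (yP k)"
        using choice1[OF exP] by blast
      have exQ: "\<forall>k<s. \<exists>f. f \<in> hom_polys F d \<and> kills d f ((\<Union>i\<in>{..<n}. SP i) \<union> (\<Union>j\<in>{..<s}-{k}. SQ j))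
          \<and> ev d f (Q k) = fst (yQ k) \<and> dd d f (Q k) (b1 k) = fst (snd (yQ k)) \<and> dd d f (Q k) (b2 k) = snd (snd (yQ k))"
      proof (intro allI impI)
        fix k assume k: "k < s"
        define D' where "D' = d - \<delta>Q k - 1"
        have dd': "\<delta>Q k + Suc D' = d" using dQ[OF k] unfolding D'_def by simp
        have "yQ k \<in> F \<times> F \<times> F" using yQ k by (simp add: PiE_iff)
        hence XY: "fst (yQ k) \<in> F" "fst (snd (yQ k)) \<in> F" "snd (snd (yQ k)) \<in> F" by (simp_all add: mem_Times_iff)
        obtain f where f: "f \<in> hom_polys F (\<delta>Q k + Suc D')"
          "\<forall>S. kills (\<delta>Q k) (HQ k) S \<longrightarrow> kills (\<delta>Q k + Suc D') f S"
          "ev (\<delta>Q k + Suc D') f (Q k) = fst (yQ k)" "dd (\<delta>Q k + Suc D') f (Q k) (b1 k) = fst (snd (yQ k))"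
          "dd (\<delta>Q k + Suc D') f (Q k) (b2 k) = snd (snd (yQ k))"
          using surjQ[OF qd[OF k], of "HQ k" "\<delta>Q k" "fst (yQ k)" "fst (snd (yQ k))" "snd (snd (yQ k))" D'] HQ k XY
          by blast
        show "\<exists>f. f \<in> hom_polys F d \<and> kills d f ((\<Union>i\<in>{..<n}. SP i) \<union> (\<Union>j\<in>{..<s}-{k}. SQ j))
          \<and> ev d f (Q k) = fst (yQ k) \<and> dd d f (Q k) (b1 k) = fst (snd (yQ k)) \<and> dd d f (Q k) (b2 k) = snd (snd (yQ k))"
          using f HQ k unfolding dd' by blast
      qed
      obtain fQ where fQ: "\<forall>k<s. fQ k \<in> hom_polys F d \<and> kills d (fQ k) ((\<Union>i\<in>{..<n}. SP i) \<union> (\<Union>j\<in>{..<s}-{k}. SQ j))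
          \<and> ev d (fQ k) (Q k) = fst (yQ k) \<and> dd d (fQ k) (Q k) (b1 k) = fst (snd (yQ k))
          \<and> dd d (fQ k) (Q k) (b2 k) = snd (snd (yQ k))"
        using choice1[OF exQ] by blast
      define f where "f = (\<lambda>m. (\<Sum>k<n. fP k m) + (\<Sum>k<s. fQ k m))"
      have fV: "f \<in> V" unfolding f_def V_def using fP fQ by (intro hp_add hp_sum) auto
      have zP: "ev d (fP k) (u i) = 0 \<and> dd d (fP k) (u i) (b i) = 0" if "k < n" "i < n" "k \<noteq> i" for k i
      proof -
        have "kills d (fP k) ((\<Union>i\<in>{..<n}-{k}. SP i) \<union> (\<Union>j\<in>{..<s}. SQ j))" using fP that by blast
        hence "kills d (fP k) (SP i)" using that unfolding kills_Un kills_UN by blast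
        thus ?thesis unfolding kills_iff SP_def by simp
      qed
      have zPQ: "ev d (fP k) (Q j) = 0 \<and> dd d (fP k) (Q j) (b1 j) = 0 \<and> dd d (fP k) (Q j) (b2 j) = 0"
        if "k < n" "j < s" for k j
      proof -
        have "kills d (fP k) ((\<Union>i\<in>{..<n}-{k}. SP i) \<union> (\<Union>j\<in>{..<s}. SQ j))" using fP that by blast
        hence "kills d (fP k) (SQ j)" using that unfolding kills_Un kills_UN by blast
        thus ?thesis unfolding kills_iff SQ_def by simp
      qed
      have zQP: "ev d (fQ k) (u i) = 0 \<and> dd d (fQ k) (u i) (b i) = 0" if "k < s" "i < n" for k i
      proof -
        have "kills d (fQ k) ((\<Union>i\<in>{..<n}. SP i) \<union> (\<Union>j\<in>{..<s}-{k}. SQ j))" using fQ that by blast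
        hence "kills d (fQ k) (SP i)" using that unfolding kills_Un kills_UN by blast
        thus ?thesis unfolding kills_iff SP_def by simp
      qed
      have zQ: "ev d (fQ k) (Q j) = 0 \<and> dd d (fQ k) (Q j) (b1 j) = 0 \<and> dd d (fQ k) (Q j) (b2 j) = 0"
        if "k < s" "j < s" "k \<noteq> j" for k j
      proof -
        have "kills d (fQ k) ((\<Union>i\<in>{..<n}. SP i) \<union> (\<Union>j\<in>{..<s}-{k}. SQ j))" using fQ that by blast
        hence "kills d (fQ k) (SQ j)" using that unfolding kills_Un kills_UN by blast
        thus ?thesis unfolding kills_iff SQ_def by simp
      qed
      have c1: "ev d f (u i) = fst (yP i) \<and> dd d f (u i) (b i) = snd (yP i)" if i: "i < n" for i
      proof -
        have "ev d f (u i) = (\<Sum>k<n. ev d (fP k) (u i)) + (\<Sum>k<s. ev d (fQ k) (u i))"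
          unfolding f_def ev_add ev_sum ..
        also have "(\<Sum>k<n. ev d (fP k) (u i)) = ev d (fP i) (u i)" using i zP by (intro sum_single) auto
        also have "(\<Sum>k<s. ev d (fQ k) (u i)) = 0" using i zQP by (intro sum.neutral) auto
        finally have 1: "ev d f (u i) = fst (yP i)" using fP i by simp
        have "dd d f (u i) (b i) = (\<Sum>k<n. dd d (fP k) (u i) (b i)) + (\<Sum>k<s. dd d (fQ k) (u i) (b i))"
          unfolding f_def dd_add dd_sum ..
        also have "(\<Sum>k<n. dd d (fP k) (u i) (b i)) = dd d (fP i) (u i) (b i)" using i zP by (intro sum_single) auto
        also have "(\<Sum>k<s. dd d (fQ k) (u i) (b i)) = 0" using i zQP by (intro sum.neutral) auto
        finally have 2: "dd d f (u i) (b i) = snd (yP i)" using fP i by simp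
        show ?thesis using 1 2 by simp
      qed
      have c2: "ev d f (Q j) = fst (yQ j) \<and> dd d f (Q j) (b1 j) = fst (snd (yQ j)) \<and> dd d f (Q j) (b2 j) = snd (snd (yQ j))"
        if j: "j < s" for j
      proof -
        have "ev d f (Q j) = (\<Sum>k<n. ev d (fP k) (Q j)) + (\<Sum>k<s. ev d (fQ k) (Q j))"
          unfolding f_def ev_add ev_sum ..
        also have "(\<Sum>k<n. ev d (fP k) (Q j)) = 0" using j zPQ by (intro sum.neutral) auto
        also have "(\<Sum>k<s. ev d (fQ k) (Q j)) = ev d (fQ j) (Q j)" using j zQ by (intro sum_single) auto
        finally have 1: "ev d f (Q j) = fst (yQ j)" using fQ j by simp
        have "dd d f (Q j) (b1 j) = (\<Sum>k<n. dd d (fP k) (Q j) (b1 j)) + (\<Sum>k<s. dd d (fQ k) (Q j) (b1 j))"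
          unfolding f_def dd_add dd_sum ..
        also have "(\<Sum>k<n. dd d (fP k) (Q j) (b1 j)) = 0" using j zPQ by (intro sum.neutral) auto
        also have "(\<Sum>k<s. dd d (fQ k) (Q j) (b1 j)) = dd d (fQ j) (Q j) (b1 j)" using j zQ by (intro sum_single) auto
        finally have 2: "dd d f (Q j) (b1 j) = fst (snd (yQ j))" using fQ j by simp
        have "dd d f (Q j) (b2 j) = (\<Sum>k<n. dd d (fP k) (Q j) (b2 j)) + (\<Sum>k<s. dd d (fQ k) (Q j) (b2 j))"
          unfolding f_def dd_add dd_sum ..
        also have "(\<Sum>k<n. dd d (fP k) (Q j) (b2 j)) = 0" using j zPQ by (intro sum.neutral) auto
        also have "(\<Sum>k<s. dd d (fQ k) (Q j) (b2 j)) = dd d (fQ j) (Q j) (b2 j)" using j zQ by (intro sum_single) auto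
        finally have 3: "dd d f (Q j) (b2 j) = snd (snd (yQ j))" using fQ j by simp
        show ?thesis using 1 2 3 by simp
      qed
      have "restrict (\<lambda>i. (ev d f (u i), dd d f (u i) (b i))) {..<n} = yP"
      proof -
        have "restrict (\<lambda>i. (ev d f (u i), dd d f (u i) (b i))) {..<n} = restrict yP {..<n}"
          unfolding restrict_eq_iff using c1 by auto
        thus ?thesis using PiE_restrict[OF yP] by simp
      qed
      moreover have "restrict (\<lambda>j. (ev d f (Q j), dd d f (Q j) (b1 j), dd d f (Q j) (b2 j))) {..<s} = yQ"
      proof -
        have "restrict (\<lambda>j. (ev d f (Q j), dd d f (Q j) (b1 j), dd d f (Q j) (b2 j))) {..<s} = restrict yQ {..<s}"
          unfolding restrict_eq_iff using c2 by auto
        thus ?thesis using PiE_restrict[OF yQ] by simp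
      qed
      ultimately have "\<Phi> f = y" unfolding \<Phi>_def y by simp
      thus "y \<in> \<Phi> ` V" using fV by blast
    qed
    have img: "\<Phi> ` V = T" using sub sup by blast
    have finV: "finite V" unfolding V_def by (rule hp_finite)
    have cnt: "card V = card T * card {f \<in> V. \<Phi> f = \<Phi> (\<lambda>m. 0)}"
    proof (rule count_fibers[OF finV img])
      show "\<And>f g. f \<in> V \<Longrightarrow> g \<in> V \<Longrightarrow> (\<lambda>m. f m + g m) \<in> V" unfolding V_def by (rule hp_add)
      show "\<And>f g. f \<in> V \<Longrightarrow> g \<in> V \<Longrightarrow> (\<lambda>m. f m - g m) \<in> V" unfolding V_def by (rule hp_diff)
      show "\<And>f g. f \<in> V \<Longrightarrow> g \<in> V \<Longrightarrow> \<Phi> f = \<Phi> g \<longleftrightarrow> \<Phi> (\<lambda>m. f m - g m) = \<Phi> (\<lambda>m. 0)"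
        by (rule hom)
    qed
    have V0: "card V > 0" using finV hp_zero unfolding V_def by (metis card_gt_0_iff empty_iff)
    have cE: "card (Eset (e i)) = q ^ e i" if "i < n" for i using E_card_and_surj(1)[OF epos[OF that] per[OF that] mn[OF that]] .
    have "card (PiE {..<n} (\<lambda>i. Eset (e i) \<times> Eset (e i))) = (\<Prod>i<n. card (Eset (e i)) * card (Eset (e i)))"
      by (simp add: card_PiE card_cartesian_product)
    also have "\<dots> = (\<Prod>i<n. q ^ (2 * cdeg q (P i)))"
      by (rule prod.cong[OF refl]) (simp add: cE cd mult_2 power_add)
    also have "\<dots> = q ^ (\<Sum>i<n. 2 * cdeg q (P i))" by (simp add: power_sum)
    finally have cT1: "card (PiE {..<n} (\<lambda>i. Eset (e i) \<times> Eset (e i))) = q ^ (\<Sum>i<n. 2 * cdeg q (P i))" .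
    have cT2: "card (PiE {..<s} (\<lambda>j. F \<times> F \<times> F)) = q ^ (3 * s)"
    proof -
      have "card (PiE {..<s} (\<lambda>j. F \<times> F \<times> F)) = (q * (q * q)) ^ s"
        by (simp add: card_PiE card_cartesian_product cardF)
      also have "q * (q * q) = q ^ 3" by (simp add: power3_eq_cube)
      finally show ?thesis by (simp add: power_mult)
    qed
    have cT: "card T = q ^ c" unfolding T_def c_def card_cartesian_product cT1 cT2
      by (simp add: power_add mult.commute)
    have KA: "{f \<in> hom_polys F d. A d f} = {f \<in> V. \<Phi> f = \<Phi> (\<lambda>m. 0)}" using ker unfolding V_def by blast
    have "mu_d F d A = real (card {f \<in> V. \<Phi> f = \<Phi> (\<lambda>m. 0)}) / real (card V)"
      unfolding mu_d_def KA V_def ..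
    also have "\<dots> = 1 / real (card T)" using cnt V0 by (simp add: field_simps)
    also have "\<dots> = 1 / real q ^ c" using cT by simp
    finally show ?thesis .
  qed
  have ev_eq: "\<forall>\<^sub>F d in sequentially. mu_d F d A = 1 / real q ^ c"
    unfolding eventually_sequentially using main by blast
  show ?thesis unfolding c_def[symmetric]
    using main tendsto_eventually[OF ev_eq] by blast
qed


end
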